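(* Let $L$ be an ideal lattice. A support datum $(X,\sigma)$ on $L$ is classifying if and only if the canonical morphism $f\colon(X,\sigma)\to(\operatorname{Spec}^*L,\operatorname{supp})$ (the unique continuous map with $\sigma(a)=f^{-1}(\operatorname{supp}(a))$ for compact $a$) is a homeomorphism.
   Context: An ideal lattice is a poset $(L,\leq)$ with an associative multiplication such that: (L1) $L$ is a complete lattice; (L2) every element is a supremum of compact elements ($a$ is compact if $a\leq\sup A$ implies $a\leq\sup A'$ for some finite $A'\subseteq A$); (L3) multiplication distributes over binary joins on both sides; (L4) $1=\sup L$ is compact and is a two-sided identity; (L5) products of compact elements are compact. Prime: $p\neq1$ with $ab\leq p\Rightarrow a\leq p$ or $b\leq p$; semi-prime: $bb\leq a\Rightarrow b\leq a$. $\operatorname{Spec}^*L$ is the set of primes with the topology whose open sets are unions of sets whose complements are quasi-compact open in the Zariski topology (Zariski closed sets being $V(a)=\{p\mid a\leq p\}$); $\operatorname{supp}(a)=\{p\mid a\not\leq p\}$. A support datum on $L$ is a pair $(X,\sigma)$, $X$ a space, $\sigma$ assigning to each compact $a$ a closed subset with $\sigma(a\vee b)=\sigma(a)\cup\sigma(b)$, $\sigma(1)=X$, $\sigma(ab)=\sigma(a)\cap\sigma(b)$. It is classifying if $X$ is spectral ($T_0$, quasi-compact, quasi-compact opens closed under finite intersections and forming a basis, generic points for non-empty irreducible closed sets) and $a\mapsto\bigcup_{b\leq a\text{ compact}}\sigma(b)$, $Y\mapsto\bigvee_{b\text{ compact},\sigma(b)\subseteq Y}b$ give mutually inverse bijections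 between semi-primes of $L$ and subsets $Y=\bigcup_iY_i\subseteq X$ with each $X\setminus Y_i$ quasi-compact open. *)

theory Defs
  imports "HOL-Analysis.Analysis"
begin

text \<open>The underlying complete lattice (L1) is the type 'a with its order;
  the multiplication is the parameter m.\<close>

definition lat_compact :: "'a::complete_lattice \<Rightarrow> bool" where
  "lat_compact a \<longleftrightarrow>
     (\<forall>A. a \<le> Sup A \<longrightarrow> (\<exists>A'. A' \<subseteq> A \<and> finite A' \<and> a \<le> Sup A'))"

definition ideal_lattice :: "('a::complete_lattice \<Rightarrow> 'a \<Rightarrow> 'a) \<Rightarrow> bool" where
  "ideal_lattice (m :: 'a \<Rightarrow> 'a \<Rightarrow> 'a) \<longleftrightarrow>
     (\<forall>a b c. m (m a b) c = m a (m b c)) \<and>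
     (\<forall>a::'a. \<exists>A. (\<forall>b\<in>A. lat_compact b) \<and> a = Sup A) \<and>
     (\<forall>a b c. m a (sup b c) = sup (m a b) (m a c) \<and> m (sup b c) a = sup (m b a) (m c a)) \<and>
     lat_compact (top :: 'a) \<and> (\<forall>a. m top a = a \<and> m a top = a) \<and>
     (\<forall>a b. lat_compact a \<longrightarrow> lat_compact b \<longrightarrow> lat_compact (m a b))"

definition lat_prime :: "('a::complete_lattice \<Rightarrow> 'a \<Rightarrow> 'a) \<Rightarrow> 'a \<Rightarrow> bool" where
  "lat_prime m p \<longleftrightarrow> p \<noteq> top \<and> (\<forall>a b. m a b \<le> p \<longrightarrow> a \<le> p \<or> b \<le> p)"

definition lat_semiprime :: "('a::complete_lattice \<Rightarrow> 'a \<Rightarrow> 'a) \<Rightarrow> 'a \<Rightarrow> bool" where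
  "lat_semiprime m a \<longleftrightarrow> (\<forall>b. m b b \<le> a \<longrightarrow> b \<le> a)"

definition primes :: "('a::complete_lattice \<Rightarrow> 'a \<Rightarrow> 'a) \<Rightarrow> 'a set" where
  "primes m = {p. lat_prime m p}"

definition zarV :: "('a::complete_lattice \<Rightarrow> 'a \<Rightarrow> 'a) \<Rightarrow> 'a \<Rightarrow> 'a set" where
  "zarV m a = {p \<in> primes m. a \<le> p}"

definition zariski :: "('a::complete_lattice \<Rightarrow> 'a \<Rightarrow> 'a) \<Rightarrow> 'a topology" where
  "zariski m = topology (\<lambda>U. \<exists>a. U = primes m - zarV m a)"

definition spec_star :: "('a::complete_lattice \<Rightarrow> 'a \<Rightarrow> 'a) \<Rightarrow> 'a topology" where
  "spec_star m = topology (\<lambda>S. \<exists>F. F \<subseteq> {primes m - U | U. openin (zariski m) U \<and> compactin (zariski m) U}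
                                  \<and> S = \<Union>F)"

definition supp :: "('a::complete_lattice \<Rightarrow> 'a \<Rightarrow> 'a) \<Rightarrow> 'a \<Rightarrow> 'a set" where
  "supp m a = {p \<in> primes m. \<not> a \<le> p}"

definition support_datum ::
  "('a::complete_lattice \<Rightarrow> 'a \<Rightarrow> 'a) \<Rightarrow> 'b topology \<Rightarrow> ('a \<Rightarrow> 'b set) \<Rightarrow> bool" where
  "support_datum m X \<sigma> \<longleftrightarrow>
     (\<forall>a. lat_compact a \<longrightarrow> closedin X (\<sigma> a)) \<and>
     (\<forall>a b. lat_compact a \<longrightarrow> lat_compact b \<longrightarrow> \<sigma> (sup a b) = \<sigma> a \<union> \<sigma> b) \<and>
     \<sigma> top = topspace X \<and>
     (\<forall>a b. lat_compact a \<longrightarrow> lat_compact b \<longrightarrow> \<sigma> (m a b) = \<sigma> a \<inter> \<sigma> b)"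

definition qc_open :: "'b topology \<Rightarrow> 'b set \<Rightarrow> bool" where
  "qc_open X U \<longleftrightarrow> openin X U \<and> compactin X U"

definition irreducible_in :: "'b topology \<Rightarrow> 'b set \<Rightarrow> bool" where
  "irreducible_in X C \<longleftrightarrow> C \<noteq> {} \<and> C \<subseteq> topspace X \<and>
     (\<forall>A B. closedin X A \<longrightarrow> closedin X B \<longrightarrow> C \<subseteq> A \<union> B \<longrightarrow> C \<subseteq> A \<or> C \<subseteq> B)"

definition spectral_space :: "'b topology \<Rightarrow> bool" where
  "spectral_space X \<longleftrightarrow>
     t0_space X \<and> compact_space X \<and>
     (\<forall>U V. qc_open X U \<longrightarrow> qc_open X V \<longrightarrow> qc_open X (U \<inter> V)) \<and>
     (\<forall>U x. openin X U \<longrightarrow> x \<in> U \<longrightarrow> (\<exists>W. qc_open X W \<and> x \<in> W \<and> W \<subseteq> U)) \<and>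
     (\<forall>C. closedin X C \<longrightarrow> irreducible_in X C \<longrightarrow> (\<exists>x\<in>C. X closure_of {x} = C))"

definition thomason_subset :: "'b topology \<Rightarrow> 'b set \<Rightarrow> bool" where
  "thomason_subset X Y \<longleftrightarrow>
     (\<exists>F. (\<forall>Z\<in>F. Z \<subseteq> topspace X \<and> qc_open X (topspace X - Z)) \<and> Y = \<Union>F)"

definition sd_phi :: "('a::complete_lattice \<Rightarrow> 'b set) \<Rightarrow> 'a \<Rightarrow> 'b set" where
  "sd_phi \<sigma> a = (\<Union>{\<sigma> b | b. lat_compact b \<and> b \<le> a})"

definition sd_psi :: "('a::complete_lattice \<Rightarrow> 'b set) \<Rightarrow> 'b set \<Rightarrow> 'a" where
  "sd_psi \<sigma> Y = Sup {b. lat_compact b \<and> \<sigma> b \<subseteq> Y}"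

definition classifying ::
  "('a::complete_lattice \<Rightarrow> 'a \<Rightarrow> 'a) \<Rightarrow> 'b topology \<Rightarrow> ('a \<Rightarrow> 'b set) \<Rightarrow> bool" where
  "classifying m X \<sigma> \<longleftrightarrow>
     spectral_space X \<and>
     (\<forall>a. lat_semiprime m a \<longrightarrow> thomason_subset X (sd_phi \<sigma> a) \<and> sd_psi \<sigma> (sd_phi \<sigma> a) = a) \<and>
     (\<forall>Y. thomason_subset X Y \<longrightarrow> lat_semiprime m (sd_psi \<sigma> Y) \<and> sd_phi \<sigma> (sd_psi \<sigma> Y) = Y)"

end

theory Submission
  imports Defs
begin

locale IL =
  fixes m :: "'a::complete_lattice \<Rightarrow> 'a \<Rightarrow> 'a"
  assumes IL: "ideal_lattice m"
begin

lemmas ILD = IL[unfolded ideal_lattice_def]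
lemma assoc: "m (m a b) c = m a (m b c)" using conjunct1[OF ILD] by simp
lemma alg: "\<exists>A. (\<forall>b\<in>A. lat_compact b) \<and> (a::'a) = Sup A" using conjunct1[OF conjunct2[OF ILD]] by metis
lemma distl: "m a (sup b c) = sup (m a b) (m a c)" using conjunct1[OF conjunct2[OF conjunct2[OF ILD]]] by simp
lemma distr: "m (sup b c) a = sup (m b a) (m c a)" using conjunct1[OF conjunct2[OF conjunct2[OF ILD]]] by simp
lemma top_compact: "lat_compact (top::'a)" using conjunct1[OF conjunct2[OF conjunct2[OF conjunct2[OF ILD]]]] by simp
lemma unitl[simp]: "m top a = a" using conjunct1[OF conjunct2[OF conjunct2[OF conjunct2[OF conjunct2[OF ILD]]]]] by simp
lemma unitr[simp]: "m a top = a" using conjunct1[OF conjunct2[OF conjunct2[OF conjunct2[OF conjunct2[OF ILD]]]]] by simp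
lemma comp_mult: "lat_compact a \<Longrightarrow> lat_compact b \<Longrightarrow> lat_compact (m a b)"
  using conjunct2[OF conjunct2[OF conjunct2[OF conjunct2[OF conjunct2[OF ILD]]]]] by simp

lemma monor: "b \<le> c \<Longrightarrow> m a b \<le> m a c"
  by (metis distl sup.absorb_iff2 sup.cobounded1)
lemma monol: "b \<le> c \<Longrightarrow> m b a \<le> m c a"
  by (metis distr sup.absorb_iff2 sup.cobounded1)
lemma mono2: "a \<le> a' \<Longrightarrow> b \<le> b' \<Longrightarrow> m a b \<le> m a' b'"
  by (meson monol monor order_trans)
lemma mult_le1: "m a b \<le> a" using monor[of b top a] by simp
lemma mult_le2: "m a b \<le> b" using monol[of a top b] by simp

end

lemma compact_sup: "lat_compact a \<Longrightarrow> lat_compact b \<Longrightarrow> lat_compact (sup a b)"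
proof -
  assume a: "lat_compact a" and b: "lat_compact b"
  show ?thesis unfolding lat_compact_def
  proof (intro allI impI)
    fix A assume "sup a b \<le> Sup A"
    then have "a \<le> Sup A" "b \<le> Sup A" by auto
    then obtain A1 A2 where "A1 \<subseteq> A" "finite A1" "a \<le> Sup A1" "A2 \<subseteq> A" "finite A2" "b \<le> Sup A2"
      using a b unfolding lat_compact_def by meson
    then show "\<exists>A'. A' \<subseteq> A \<and> finite A' \<and> sup a b \<le> Sup A'"
      by (intro exI[of _ "A1 \<union> A2"]) (auto simp: Sup_union_distrib le_supI1 le_supI2)
  qed
qed

lemma compact_bot: "lat_compact bot"
  unfolding lat_compact_def by (auto intro: exI[of _ "{}"])

lemma compact_Sup_finite: "finite A \<Longrightarrow> (\<forall>b\<in>A. lat_compact b) \<Longrightarrow> lat_compact (Sup A)"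
  by (induction A rule: finite_induct) (auto simp: compact_bot compact_sup)

lemma compact_le_SupD: "lat_compact b \<Longrightarrow> b \<le> Sup A \<Longrightarrow> \<exists>A'. A' \<subseteq> A \<and> finite A' \<and> b \<le> Sup A'"
  unfolding lat_compact_def by blast

context IL begin

lemma Sup_compacts: "(a::'a) = Sup {b. lat_compact b \<and> b \<le> a}"
proof -
  obtain A where A: "\<forall>b\<in>A. lat_compact b" "a = Sup A" using alg by blast
  have "A \<subseteq> {b. lat_compact b \<and> b \<le> a}" using A by (auto intro: Sup_upper)
  then have "a \<le> Sup {b. lat_compact b \<and> b \<le> a}" using A(2) by (metis Sup_subset_mono)
  moreover have "Sup {b. lat_compact b \<and> b \<le> a} \<le> a" by (auto intro: Sup_least)
  ultimately show ?thesis by (rule antisym)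
qed

lemma le_compacts: "(a::'a) \<le> c \<longleftrightarrow> (\<forall>b. lat_compact b \<and> b \<le> a \<longrightarrow> b \<le> c)"
proof
  assume "\<forall>b. lat_compact b \<and> b \<le> a \<longrightarrow> b \<le> c"
  then have "Sup {b. lat_compact b \<and> b \<le> a} \<le> c" by (auto intro: Sup_least)
  then show "a \<le> c" using Sup_compacts by metis
qed auto

lemma not_le_compact: "\<not> (a::'a) \<le> c \<Longrightarrow> \<exists>b. lat_compact b \<and> b \<le> a \<and> \<not> b \<le> c"
  using le_compacts by blast

lemma prime_mult: "lat_prime m p \<Longrightarrow> m a b \<le> p \<longleftrightarrow> a \<le> p \<or> b \<le> p"
  unfolding lat_prime_def using mult_le1 mult_le2 order_trans by blast

lemma prime_semiprime: "lat_prime m p \<Longrightarrow> lat_semiprime m p"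
  unfolding lat_semiprime_def using prime_mult by blast

lemma prime_ne_top: "lat_prime m p \<Longrightarrow> \<not> top \<le> p"
  unfolding lat_prime_def using top_le by blast

lemma chain_finite_Sup:
  fixes D :: "'b::complete_lattice set"
  shows "finite F \<Longrightarrow> F \<subseteq> D \<Longrightarrow> D \<noteq> {} \<Longrightarrow> (\<forall>x\<in>D. \<forall>y\<in>D. x \<le> y \<or> y \<le> x) \<Longrightarrow> \<exists>e\<in>D. Sup F \<le> e"
proof (induction F rule: finite_induct)
  case empty then show ?case by auto
next
  case (insert x F)
  then obtain e where e: "e \<in> D" "Sup F \<le> e" by auto
  have "x \<in> D" using insert by auto
  show ?case
  proof (cases "x \<le> e")
    case True then show ?thesis using e by auto
  next
    case False then have "e \<le> x" using insert.prems(3) e \<open>x \<in> D\<close> by blast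
    then show ?thesis using e \<open>x \<in> D\<close> by (intro bexI[of _ x]) (auto intro: order_trans)
  qed
qed

lemma prime_exists:
  assumes Sc: "\<forall>s\<in>S. lat_compact s" and Sne: "S \<noteq> {}"
    and Sm: "\<forall>s\<in>S. \<forall>t\<in>S. \<exists>u\<in>S. u \<le> m s t"
    and Sa: "\<forall>s\<in>S. \<not> s \<le> a"
  shows "\<exists>p. lat_prime m p \<and> a \<le> p \<and> (\<forall>s\<in>S. \<not> s \<le> p)"
proof -
  define P where "P = {c. a \<le> c \<and> (\<forall>s\<in>S. \<not> s \<le> c)}"
  have po: "partial_order_on P (relation_of (\<le>) P)"
    by (rule partial_order_on_relation_ofI) auto
  have "\<exists>u\<in>P. \<forall>x\<in>C. x \<le> u" if C: "C \<in> Chains (relation_of (\<le>) P)" for C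
  proof -
    have CP: "C \<subseteq> P" using Chains_relation_of[OF C] .
    have ch: "\<forall>x\<in>C. \<forall>y\<in>C. x \<le> y \<or> y \<le> x" using C unfolding Chains_def relation_of_def by blast
    let ?D = "insert a C"
    have chD: "\<forall>x\<in>?D. \<forall>y\<in>?D. x \<le> y \<or> y \<le> x" using ch CP unfolding P_def by blast
    have "Sup ?D \<in> P"
    proof -
      have "a \<le> Sup ?D" by (rule Sup_upper) simp
      moreover have "\<not> s \<le> Sup ?D" if "s \<in> S" for s
      proof
        assume "s \<le> Sup ?D"
        have cs: "lat_compact s" using Sc that by blast
        have "\<exists>F. F \<subseteq> ?D \<and> finite F \<and> s \<le> Sup F" by (rule compact_le_SupD[OF cs \<open>s \<le> Sup ?D\<close>])
        then obtain F where F: "F \<subseteq> ?D" "finite F" "s \<le> Sup F" by metis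
        have "\<exists>e\<in>?D. Sup F \<le> e" by (rule chain_finite_Sup[OF F(2) F(1) insert_not_empty chD])
        then obtain e where "e \<in> ?D" "Sup F \<le> e" by metis
        then have "s \<le> e" using F(3) by order
        moreover have "e \<in> P \<or> e = a" using \<open>e \<in> ?D\<close> CP by blast
        ultimately show False using Sa that unfolding P_def by blast
      qed
      ultimately show ?thesis unfolding P_def by blast
    qed
    then show ?thesis by (meson Sup_upper insertCI)
  qed
  then obtain p where pP: "p \<in> P" and pmax: "\<forall>x\<in>P. p \<le> x \<longrightarrow> x = p"
    using predicate_Zorn[OF po] by blast
  have ap: "a \<le> p" and pS: "\<forall>s\<in>S. \<not> s \<le> p" using pP unfolding P_def by blast+
  have "lat_prime m p" unfolding lat_prime_def
  proof (intro conjI allI impI)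
    show "p \<noteq> top" using pS Sne by auto
    fix x y assume xy: "m x y \<le> p"
    show "x \<le> p \<or> y \<le> p"
    proof (rule ccontr)
      assume "\<not> (x \<le> p \<or> y \<le> p)"
      then have nx: "sup p x \<noteq> p" and ny: "sup p y \<noteq> p" by (auto simp: sup.absorb_iff1)
      have "sup p x \<notin> P" using pmax nx by auto
      then obtain s where s: "s \<in> S" "s \<le> sup p x" using ap unfolding P_def by (auto intro: le_supI1)
      have "sup p y \<notin> P" using pmax ny by auto
      then obtain t where t: "t \<in> S" "t \<le> sup p y" using ap unfolding P_def by (auto intro: le_supI1)
      obtain u where u: "u \<in> S" "u \<le> m s t" using Sm s t by blast
      have "m s t \<le> m (sup p x) (sup p y)" using s t by (simp add: mono2)
      also have "\<dots> = sup (sup (m p p) (m x p)) (sup (m p y) (m x y))" by (simp add: distl distr)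
      also have "\<dots> \<le> p" using xy by (auto intro: mult_le1 mult_le2)
      finally show False using u pS by (meson order_trans)
    qed
  qed
  then show ?thesis using ap pS by blast
qed

end

primrec sqs :: "('a \<Rightarrow> 'a \<Rightarrow> 'a) \<Rightarrow> 'a \<Rightarrow> nat \<Rightarrow> 'a" where
  "sqs m b 0 = b"
| "sqs m b (Suc n) = m (sqs m b n) (sqs m b n)"

context IL begin

lemma sqs_compact: "lat_compact b \<Longrightarrow> lat_compact (sqs m b n)"
  by (induction n) (auto simp: comp_mult)

lemma sqs_anti: "i \<le> j \<Longrightarrow> sqs m b j \<le> sqs m b i"
proof (induction j)
  case 0 then show ?case by simp
next
  case (Suc j)
  show ?case
  proof (cases "i = Suc j")
    case True then show ?thesis by simp
  next
    case False
    then have "sqs m b j \<le> sqs m b i" using Suc by simp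
    moreover have "sqs m b (Suc j) \<le> sqs m b j" by (simp add: mult_le1)
    ultimately show ?thesis by order
  qed
qed

lemma sqs_semiprime: "lat_semiprime m a \<Longrightarrow> \<not> b \<le> a \<Longrightarrow> \<not> sqs m b n \<le> a"
proof (induction n)
  case 0 then show ?case by simp
next
  case (Suc n)
  have "\<not> sqs m b n \<le> a" using Suc by blast
  then show ?case using Suc.prems(1) unfolding lat_semiprime_def by (metis sqs.simps(2))
qed

lemma sqs_prime: "lat_prime m a \<Longrightarrow> \<not> b \<le> a \<Longrightarrow> \<not> sqs m b n \<le> a"
  using sqs_semiprime prime_semiprime by blast

lemma sqs_msys: "\<forall>s\<in>range (sqs m b). \<forall>t\<in>range (sqs m b). \<exists>u\<in>range (sqs m b). u \<le> m s t"
proof (intro ballI)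
  fix s t assume "s \<in> range (sqs m b)" "t \<in> range (sqs m b)"
  then obtain i j where ij: "s = sqs m b i" "t = sqs m b j" by auto
  let ?k = "max i j"
  have "sqs m b (Suc ?k) \<le> m s t" unfolding ij
    by (simp add: mono2 sqs_anti)
  then show "\<exists>u\<in>range (sqs m b). u \<le> m s t" by blast
qed

lemma SP:
  assumes "lat_semiprime m a" "lat_compact b" "\<not> b \<le> a"
  shows "\<exists>p. lat_prime m p \<and> a \<le> p \<and> \<not> b \<le> p"
proof -
  have "\<exists>p. lat_prime m p \<and> a \<le> p \<and> (\<forall>s\<in>range (sqs m b). \<not> s \<le> p)"
    apply (rule prime_exists)
    using assms sqs_compact sqs_msys sqs_semiprime by auto
  then show ?thesis by (metis rangeI sqs.simps(1))
qed

section \<open>Zariski\<close>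

lemma supp_eq: "supp m a = primes m - zarV m a"
  unfolding supp_def zarV_def by auto

lemma zarV_sub: "zarV m a \<subseteq> primes m" unfolding zarV_def by auto

lemma in_primes: "p \<in> primes m \<longleftrightarrow> lat_prime m p" unfolding primes_def by simp

lemma zarV_mult: "zarV m (m a b) = zarV m a \<union> zarV m b"
  unfolding zarV_def primes_def using prime_mult by auto

lemma zarV_sup: "zarV m (sup a b) = zarV m a \<inter> zarV m b"
  unfolding zarV_def by auto

lemma zarV_Sup: "zarV m (Sup A) = primes m \<inter> \<Inter> (zarV m ` A)"
  unfolding zarV_def by (auto simp: Sup_le_iff)

lemma zarV_top: "zarV m top = {}"
  unfolding zarV_def primes_def using prime_ne_top by auto

lemma zarV_bot: "zarV m bot = primes m"
  unfolding zarV_def by auto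

lemma supp_mono: "a \<le> b \<Longrightarrow> supp m a \<subseteq> supp m b"
  unfolding supp_def by (smt (verit) mem_Collect_eq order_trans subsetI)

lemma supp_Sup: "supp m (Sup A) = \<Union> (supp m ` A)"
  unfolding supp_def by (auto simp: Sup_le_iff)

lemma supp_sup: "supp m (sup a b) = supp m a \<union> supp m b"
  unfolding supp_def by auto

lemma supp_mult: "supp m (m a b) = supp m a \<inter> supp m b"
  unfolding supp_def primes_def using prime_mult by auto

lemma supp_top: "supp m top = primes m"
  unfolding supp_def primes_def using prime_ne_top by auto

lemma supp_bot: "supp m bot = {}"
  unfolding supp_def by auto

lemma istop_zariski: "istopology (\<lambda>U. \<exists>a. U = primes m - zarV m a)"
  unfolding istopology_def
proof (intro conjI allI impI)
  fix S T assume "\<exists>a. S = primes m - zarV m a" "\<exists>a. T = primes m - zarV m a"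
  then obtain a b where "S = primes m - zarV m a" "T = primes m - zarV m b" by metis
  then have "S \<inter> T = primes m - zarV m (m a b)" by (auto simp: zarV_mult)
  then show "\<exists>a. S \<inter> T = primes m - zarV m a" by metis
next
  fix K assume K: "\<forall>k\<in>K. \<exists>a. k = primes m - zarV m a"
  let ?A = "{a. primes m - zarV m a \<in> K}"
  have "\<Union>K = primes m - zarV m (Sup ?A)"
  proof
    show "\<Union>K \<subseteq> primes m - zarV m (Sup ?A)"
    proof
      fix x assume "x \<in> \<Union>K"
      then obtain k where "k \<in> K" "x \<in> k" by blast
      then obtain a where a: "k = primes m - zarV m a" using K by metis
      then have "a \<in> ?A" using \<open>k \<in> K\<close> by simp
      then show "x \<in> primes m - zarV m (Sup ?A)" using \<open>x \<in> k\<close> a by (auto simp: zarV_Sup)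
    qed
    show "primes m - zarV m (Sup ?A) \<subseteq> \<Union>K"
      by (auto simp: zarV_Sup)
  qed
  then show "\<exists>a. \<Union>K = primes m - zarV m a" by metis
qed

lemma openin_zariski: "openin (zariski m) U \<longleftrightarrow> (\<exists>a. U = supp m a)"
  unfolding zariski_def using istop_zariski by (simp add: supp_eq)

lemma topspace_zariski: "topspace (zariski m) = primes m"
proof -
  have "openin (zariski m) (primes m)" unfolding openin_zariski
    by (metis supp_top)
  moreover have "U \<subseteq> primes m" if "openin (zariski m) U" for U
    using that unfolding openin_zariski supp_def by auto
  ultimately show ?thesis unfolding topspace_def by blast
qed

lemma supp_compact_zariski:
  assumes c: "lat_compact c"
  shows "compactin (zariski m) (supp m c)"
  unfolding compactin_def
proof (intro conjI allI impI)
  show "supp m c \<subseteq> topspace (zariski m)" by (auto simp: topspace_zariski supp_def)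
  fix \<U> assume U: "(\<forall>U\<in>\<U>. openin (zariski m) U) \<and> supp m c \<subseteq> \<Union>\<U>"
  let ?A = "{a. supp m a \<in> \<U>}"
  have UA: "\<Union>\<U> = supp m (Sup ?A)"
  proof -
    have "\<U> = supp m ` ?A" using U unfolding openin_zariski by auto
    then show ?thesis by (simp add: supp_Sup)
  qed
  have "\<exists>n. sqs m c n \<le> Sup ?A"
  proof (rule ccontr)
    assume "\<not> (\<exists>n. sqs m c n \<le> Sup ?A)"
    then have "\<exists>p. lat_prime m p \<and> Sup ?A \<le> p \<and> (\<forall>s\<in>range (sqs m c). \<not> s \<le> p)"
      apply (intro prime_exists)
      using c sqs_compact sqs_msys by auto
    then obtain p where p: "lat_prime m p" "Sup ?A \<le> p" "\<forall>s\<in>range (sqs m c). \<not> s \<le> p" by metis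
    then have "p \<in> supp m c" unfolding supp_def primes_def by (metis mem_Collect_eq rangeI sqs.simps(1))
    moreover have "p \<notin> supp m (Sup ?A)" using p unfolding supp_def by auto
    ultimately show False using U UA by auto
  qed
  then obtain n where n: "sqs m c n \<le> Sup ?A" by metis
  have "\<exists>A'. A' \<subseteq> ?A \<and> finite A' \<and> sqs m c n \<le> Sup A'"
    by (rule compact_le_SupD[OF sqs_compact[OF c] n])
  then obtain A' where A': "A' \<subseteq> ?A" "finite A'" "sqs m c n \<le> Sup A'" by metis
  have "supp m c \<subseteq> supp m (Sup A')"
  proof
    fix q assume "q \<in> supp m c"
    then have q: "lat_prime m q" "\<not> c \<le> q" "q \<in> primes m" unfolding supp_def primes_def by auto
    then have "\<not> sqs m c n \<le> q" using sqs_prime by blast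
    then have "\<not> Sup A' \<le> q" using A'(3) by (meson order_trans)
    then show "q \<in> supp m (Sup A')" using q unfolding supp_def by auto
  qed
  then have "supp m c \<subseteq> \<Union> (supp m ` A')" by (simp add: supp_Sup)
  moreover have "supp m ` A' \<subseteq> \<U>" using A'(1) by auto
  ultimately show "\<exists>\<F>. finite \<F> \<and> \<F> \<subseteq> \<U> \<and> supp m c \<subseteq> \<Union>\<F>"
    using A'(2) by (metis finite_imageI)
qed

lemma qc_zariski:
  assumes "openin (zariski m) U" "compactin (zariski m) U"
  shows "\<exists>c. lat_compact c \<and> U = supp m c"
proof -
  obtain a where a: "U = supp m a" using assms(1) unfolding openin_zariski by metis
  define B where "B = {b. lat_compact b \<and> b \<le> a}"
  have "U = supp m (Sup B)" unfolding a B_def using Sup_compacts[of a] by simp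
  then have Ua: "U = \<Union> (supp m ` B)" by (simp add: supp_Sup)
  have op: "\<forall>V\<in>supp m ` B. openin (zariski m) V" unfolding openin_zariski by auto
  have "\<exists>F. finite F \<and> F \<subseteq> supp m ` B \<and> U \<subseteq> \<Union>F"
    using assms(2) op Ua unfolding compactin_def by simp
  then obtain F where F: "finite F" "F \<subseteq> supp m ` B" "U \<subseteq> \<Union>F" by metis
  have "\<exists>B'. B' \<subseteq> B \<and> finite B' \<and> F = supp m ` B'"
    using finite_subset_image[OF F(1) F(2)] by metis
  then obtain B' where B': "B' \<subseteq> B" "finite B'" "F = supp m ` B'" by metis
  have cB: "lat_compact (Sup B')" using B'(1,2) compact_Sup_finite unfolding B_def by auto
  have "supp m (Sup B') \<subseteq> U"
  proof -
    have "Sup B' \<le> a" using B'(1) unfolding B_def by (simp add: Sup_le_iff subset_eq)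
    then show ?thesis unfolding a by (rule supp_mono)
  qed
  moreover have "U \<subseteq> supp m (Sup B')" using F(3) B'(3) by (simp add: supp_Sup)
  ultimately have "U = supp m (Sup B')" by (rule antisym[rotated])
  then show ?thesis using cB by metis
qed

end

lemma istop_unions:
  assumes "\<And>A B. A \<in> Q \<Longrightarrow> B \<in> Q \<Longrightarrow> A \<inter> B \<in> Q"
  shows "istopology (\<lambda>S. \<exists>F. F \<subseteq> Q \<and> S = \<Union>F)"
  unfolding istopology_def
proof (intro conjI allI impI)
  fix S T assume "\<exists>F. F \<subseteq> Q \<and> S = \<Union>F" "\<exists>F. F \<subseteq> Q \<and> T = \<Union>F"
  then obtain F1 F2 where F: "F1 \<subseteq> Q" "S = \<Union>F1" "F2 \<subseteq> Q" "T = \<Union>F2" by metis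
  let ?G = "{A \<inter> B | A B. A \<in> F1 \<and> B \<in> F2}"
  have "?G \<subseteq> Q" using F assms by auto
  moreover have "S \<inter> T = \<Union>?G"
  proof (intro set_eqI iffI)
    fix x assume "x \<in> S \<inter> T"
    then obtain A B where "A \<in> F1" "x \<in> A" "B \<in> F2" "x \<in> B" using F by auto
    then have "A \<inter> B \<in> ?G" "x \<in> A \<inter> B" by auto
    then show "x \<in> \<Union>?G" by (rule UnionI)
  next
    fix x assume "x \<in> \<Union>?G"
    then obtain X where "X \<in> ?G" "x \<in> X" by (rule UnionE)
    then obtain A B where "X = A \<inter> B" "A \<in> F1" "B \<in> F2" by auto
    then show "x \<in> S \<inter> T" using F \<open>x \<in> X\<close> by auto
  qed
  ultimately show "\<exists>F. F \<subseteq> Q \<and> S \<inter> T = \<Union>F" by blast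
next
  fix K assume K: "\<forall>k\<in>K. \<exists>F. F \<subseteq> Q \<and> k = \<Union>F"
  let ?G = "{A \<in> Q. \<exists>k\<in>K. A \<subseteq> k}"
  have "\<Union>K \<subseteq> \<Union>?G"
  proof
    fix x assume "x \<in> \<Union>K"
    then obtain k where k: "k \<in> K" "x \<in> k" by auto
    then obtain F where F: "F \<subseteq> Q" "k = \<Union>F" using K by metis
    then obtain A where "A \<in> F" "x \<in> A" using k by auto
    then show "x \<in> \<Union>?G" using k F by blast
  qed
  moreover have "\<Union>?G \<subseteq> \<Union>K" by auto
  ultimately have "\<Union>K = \<Union>?G" by (rule antisym)
  moreover have "?G \<subseteq> Q" by auto
  ultimately show "\<exists>F. F \<subseteq> Q \<and> \<Union>K = \<Union>F" by blast
qed

context IL begin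

lemma zarV_anti: "a \<le> b \<Longrightarrow> zarV m b \<subseteq> zarV m a"
  unfolding zarV_def by (smt (verit) mem_Collect_eq order_trans subsetI)

lemma istop_spec:
  "istopology (\<lambda>S. \<exists>F. F \<subseteq> {primes m - U | U. openin (zariski m) U \<and> compactin (zariski m) U} \<and> S = \<Union>F)"
proof (rule istop_unions)
  fix A B assume "A \<in> {primes m - U | U. openin (zariski m) U \<and> compactin (zariski m) U}"
    "B \<in> {primes m - U | U. openin (zariski m) U \<and> compactin (zariski m) U}"
  then obtain U V where UV: "A = primes m - U" "openin (zariski m) U" "compactin (zariski m) U"
        "B = primes m - V" "openin (zariski m) V" "compactin (zariski m) V" by auto
  then have "A \<inter> B = primes m - (U \<union> V)" "openin (zariski m) (U \<union> V)" "compactin (zariski m) (U \<union> V)"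
    by (auto simp: compactin_Un)
  then show "A \<inter> B \<in> {primes m - U | U. openin (zariski m) U \<and> compactin (zariski m) U}" by auto
qed

lemma Q_eq: "{primes m - U | U. openin (zariski m) U \<and> compactin (zariski m) U} = {zarV m c | c. lat_compact c}"
proof -
  have "primes m - supp m c = zarV m c" for c unfolding supp_eq using zarV_sub by blast
  then show ?thesis
    using qc_zariski supp_compact_zariski openin_zariski by metis
qed

lemma openin_spec: "openin (spec_star m) S \<longleftrightarrow> (\<exists>F. F \<subseteq> {zarV m c | c. lat_compact c} \<and> S = \<Union>F)"
  unfolding spec_star_def using istop_spec by (simp add: Q_eq)

lemma openin_spec_iff: "openin (spec_star m) S \<longleftrightarrow>
   S \<subseteq> primes m \<and> (\<forall>p\<in>S. \<exists>c. lat_compact c \<and> p \<in> zarV m c \<and> zarV m c \<subseteq> S)"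
proof
  assume "openin (spec_star m) S"
  then obtain F where F: "F \<subseteq> {zarV m c | c. lat_compact c}" "S = \<Union>F" unfolding openin_spec by auto
  have ex: "\<exists>c. lat_compact c \<and> p \<in> zarV m c \<and> zarV m c \<subseteq> S" if pS: "p \<in> S" for p
  proof -
    obtain A where A: "A \<in> F" "p \<in> A" using pS F(2) by auto
    then obtain c where c: "lat_compact c" "A = zarV m c" using F(1) by auto
    have "zarV m c \<subseteq> S" using A c F(2) by auto
    then show ?thesis using c A by auto
  qed
  have "S \<subseteq> primes m"
  proof
    fix p assume "p \<in> S"
    then obtain c where "p \<in> zarV m c" using ex by auto
    then show "p \<in> primes m" using zarV_sub by auto
  qed
  then show "S \<subseteq> primes m \<and> (\<forall>p\<in>S. \<exists>c. lat_compact c \<and> p \<in> zarV m c \<and> zarV m c \<subseteq> S)"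
    using ex by auto
next
  assume R: "S \<subseteq> primes m \<and> (\<forall>p\<in>S. \<exists>c. lat_compact c \<and> p \<in> zarV m c \<and> zarV m c \<subseteq> S)"
  define F where "F = {zarV m c | c. lat_compact c \<and> zarV m c \<subseteq> S}"
  have "S \<subseteq> \<Union>F"
  proof
    fix p assume "p \<in> S"
    then obtain c where c: "lat_compact c" "p \<in> zarV m c" "zarV m c \<subseteq> S" using R by auto
    then have "zarV m c \<in> F" unfolding F_def by auto
    then show "p \<in> \<Union>F" using c by auto
  qed
  moreover have "\<Union>F \<subseteq> S" unfolding F_def by auto
  ultimately have "S = \<Union>F" by (rule antisym)
  moreover have "F \<subseteq> {zarV m c | c. lat_compact c}" unfolding F_def by auto
  ultimately show "openin (spec_star m) S" unfolding openin_spec by blast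
qed

lemma zarV_open: "lat_compact c \<Longrightarrow> openin (spec_star m) (zarV m c)"
  unfolding openin_spec_iff using zarV_sub by blast

lemma topspace_spec: "topspace (spec_star m) = primes m"
proof -
  have "openin (spec_star m) (primes m)" using zarV_open[OF compact_bot] zarV_bot by metis
  moreover have "U \<subseteq> primes m" if "openin (spec_star m) U" for U
    using that unfolding openin_spec_iff by blast
  ultimately show ?thesis unfolding topspace_def by blast
qed

lemma zarV_compact:
  assumes c: "lat_compact c"
  shows "compactin (spec_star m) (zarV m c)"
  unfolding compactin_def
proof (intro conjI allI impI)
  show "zarV m c \<subseteq> topspace (spec_star m)" by (simp add: topspace_spec zarV_sub)
  fix \<U> assume U: "(\<forall>U\<in>\<U>. openin (spec_star m) U) \<and> zarV m c \<subseteq> \<Union>\<U>"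
  define D where "D = {d. lat_compact d \<and> (\<exists>W\<in>\<U>. zarV m d \<subseteq> W)}"
  have cov: "zarV m c \<subseteq> \<Union> (zarV m ` D)"
  proof
    fix p assume "p \<in> zarV m c"
    then obtain W where "W \<in> \<U>" "p \<in> W" using U by blast
    then obtain d where "lat_compact d" "p \<in> zarV m d" "zarV m d \<subseteq> W"
      using U unfolding openin_spec_iff by metis
    then show "p \<in> \<Union> (zarV m ` D)" unfolding D_def using \<open>W \<in> \<U>\<close> by blast
  qed
  have "\<exists>D'. D' \<subseteq> D \<and> finite D' \<and> zarV m c \<subseteq> \<Union> (zarV m ` D')"
  proof (rule ccontr)
    assume nf: "\<not> (\<exists>D'. D' \<subseteq> D \<and> finite D' \<and> zarV m c \<subseteq> \<Union> (zarV m ` D'))"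
    define S where "S = {s. lat_compact s \<and> (\<exists>D'. D' \<subseteq> D \<and> finite D' \<and> zarV m s \<subseteq> \<Union> (zarV m ` D'))}"
    have Sc: "\<forall>s\<in>S. lat_compact s" unfolding S_def by blast
    have topS: "top \<in> S" unfolding S_def using top_compact zarV_top by auto
    have Sm: "\<forall>s\<in>S. \<forall>t\<in>S. \<exists>u\<in>S. u \<le> m s t"
    proof (intro ballI)
      fix s t assume "s \<in> S" "t \<in> S"
      then obtain D1 D2 where D: "lat_compact s" "D1 \<subseteq> D" "finite D1" "zarV m s \<subseteq> \<Union> (zarV m ` D1)"
        "lat_compact t" "D2 \<subseteq> D" "finite D2" "zarV m t \<subseteq> \<Union> (zarV m ` D2)" unfolding S_def by blast
      have "zarV m (m s t) \<subseteq> \<Union> (zarV m ` (D1 \<union> D2))" using D by (auto simp: zarV_mult)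
      moreover have "lat_compact (m s t)" using D comp_mult by blast
      ultimately have "m s t \<in> S" unfolding S_def using D by (metis (mono_tags, lifting) finite_UnI le_sup_iff mem_Collect_eq)
      then show "\<exists>u\<in>S. u \<le> m s t" by blast
    qed
    have Sa: "\<forall>s\<in>S. \<not> s \<le> c"
    proof (intro ballI notI)
      fix s assume "s \<in> S" "s \<le> c"
      then obtain D' where "D' \<subseteq> D" "finite D'" "zarV m s \<subseteq> \<Union> (zarV m ` D')" unfolding S_def by blast
      moreover have "zarV m c \<subseteq> zarV m s" using \<open>s \<le> c\<close> by (rule zarV_anti)
      ultimately show False using nf by blast
    qed
    obtain p where p: "lat_prime m p" "c \<le> p" "\<forall>s\<in>S. \<not> s \<le> p"
      using prime_exists[OF Sc _ Sm Sa] topS by blast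
    then have "p \<in> zarV m c" unfolding zarV_def primes_def by simp
    then obtain d where "d \<in> D" "p \<in> zarV m d" using cov by blast
    moreover have "d \<in> S" unfolding S_def using \<open>d \<in> D\<close> unfolding D_def
      by (intro CollectI conjI exI[of _ "{d}"]) auto
    ultimately show False using p unfolding zarV_def by blast
  qed
  then obtain D' where D': "D' \<subseteq> D" "finite D'" "zarV m c \<subseteq> \<Union> (zarV m ` D')" by metis
  define g where "g d = (SOME W. W \<in> \<U> \<and> zarV m d \<subseteq> W)" for d
  have g: "g d \<in> \<U> \<and> zarV m d \<subseteq> g d" if "d \<in> D" for d
    unfolding g_def by (rule someI_ex) (use that D_def in blast)
  show "\<exists>\<F>. finite \<F> \<and> \<F> \<subseteq> \<U> \<and> zarV m c \<subseteq> \<Union>\<F>"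
  proof (intro exI conjI)
    show "finite (g ` D')" using D' by simp
    show "g ` D' \<subseteq> \<U>" using D' g by blast
    show "zarV m c \<subseteq> \<Union> (g ` D')" using D' g by blast
  qed
qed

lemma finite_union_zarV: "finite F \<Longrightarrow> F \<subseteq> {zarV m c | c. lat_compact c} \<Longrightarrow> \<exists>c. lat_compact c \<and> \<Union>F = zarV m c"
proof (induction F rule: finite_induct)
  case empty then show ?case using top_compact zarV_top by auto
next
  case (insert A F)
  then obtain c where c: "lat_compact c" "\<Union>F = zarV m c" by blast
  obtain d where d: "lat_compact d" "A = zarV m d" using insert.prems by blast
  have "\<Union>(insert A F) = zarV m (m d c)" using c d by (simp add: zarV_mult)
  then show ?case using c d comp_mult by blast
qed

lemma qc_spec:
  assumes "openin (spec_star m) W" "compactin (spec_star m) W"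
  shows "\<exists>c. lat_compact c \<and> W = zarV m c"
proof -
  obtain F where F: "F \<subseteq> {zarV m c | c. lat_compact c}" "W = \<Union>F" using assms(1) unfolding openin_spec by auto
  have op: "\<forall>A\<in>F. openin (spec_star m) A"
  proof
    fix A assume "A \<in> F"
    then obtain c where "lat_compact c" "A = zarV m c" using F(1) by auto
    then show "openin (spec_star m) A" using zarV_open by simp
  qed
  have "(\<forall>U\<in>F. openin (spec_star m) U) \<and> W \<subseteq> \<Union>F" using op F(2) by simp
  then have "\<exists>F'. finite F' \<and> F' \<subseteq> F \<and> W \<subseteq> \<Union>F'"
    by (rule mp[OF spec[OF conjunct2[OF assms(2)[unfolded compactin_def]], of F]])
  then obtain F' where F': "finite F'" "F' \<subseteq> F" "W \<subseteq> \<Union>F'" by auto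
  have "\<Union>F' \<subseteq> W" using F'(2) F(2) by auto
  then have WF: "W = \<Union>F'" using F'(3) by (rule antisym[rotated])
  have sub: "F' \<subseteq> {zarV m c | c. lat_compact c}" using F'(2) F(1) by (rule order_trans)
  obtain c where "lat_compact c" "\<Union>F' = zarV m c" using finite_union_zarV[OF F'(1) sub] by auto
  then show ?thesis using WF by auto
qed

lemma closure_spec:
  assumes p: "p \<in> primes m"
  shows "spec_star m closure_of {p} = {q \<in> primes m. q \<le> p}"
proof (intro set_eqI iffI)
  fix q assume qc: "q \<in> spec_star m closure_of {p}"
  then have q1: "q \<in> primes m" using in_closure_of topspace_spec by metis
  have q2: "\<And>T. q \<in> T \<Longrightarrow> openin (spec_star m) T \<Longrightarrow> p \<in> T"
    using qc unfolding in_closure_of by auto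
  have "q \<le> p"
  proof (rule ccontr)
    assume "\<not> q \<le> p"
    then obtain b where b: "lat_compact b" "b \<le> q" "\<not> b \<le> p" using not_le_compact by blast
    then have "q \<in> zarV m b" using q1 unfolding zarV_def by simp
    then have "p \<in> zarV m b" using q2 zarV_open[OF b(1)] by simp
    then show False using b unfolding zarV_def by simp
  qed
  then show "q \<in> {q \<in> primes m. q \<le> p}" using q1 by simp
next
  fix q assume "q \<in> {q \<in> primes m. q \<le> p}"
  then have q: "q \<in> primes m" "q \<le> p" by auto
  have "p \<in> T" if T: "q \<in> T" "openin (spec_star m) T" for T
  proof -
    obtain c where c: "lat_compact c" "q \<in> zarV m c" "zarV m c \<subseteq> T" using T unfolding openin_spec_iff by auto
    then have "c \<le> q" unfolding zarV_def by simp
    then have "c \<le> p" using q(2) by (rule order_trans)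
    then have "p \<in> zarV m c" using p unfolding zarV_def by simp
    then show "p \<in> T" using c by auto
  qed
  then show "q \<in> spec_star m closure_of {p}" unfolding in_closure_of topspace_spec using q by auto
qed

end

lemma spectral_homeo:
  assumes h: "homeomorphic_map X Y f" and sY: "spectral_space Y"
  shows "spectral_space X"
proof -
  have sp: "f ` topspace X = topspace Y" and inj: "inj_on f (topspace X)"
    using h by (auto simp: homeomorphic_eq_everything_map)
  have cont: "continuous_map X Y f" using h by (rule homeomorphic_imp_continuous_map)
  have hs: "X homeomorphic_space Y" using h by (rule homeomorphic_map_imp_homeomorphic_space)
  have qcX: "qc_open X U \<longleftrightarrow> U \<subseteq> topspace X \<and> qc_open Y (f ` U)" for U
    unfolding qc_open_def using homeomorphic_map_openness_eq[OF h, of U] homeomorphic_map_compactness_eq[OF h, of U] by auto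
  have Y: "t0_space Y" "compact_space Y"
    "\<And>U V. qc_open Y U \<Longrightarrow> qc_open Y V \<Longrightarrow> qc_open Y (U \<inter> V)"
    "\<And>U x. openin Y U \<Longrightarrow> x \<in> U \<Longrightarrow> \<exists>W. qc_open Y W \<and> x \<in> W \<and> W \<subseteq> U"
    "\<And>C. closedin Y C \<Longrightarrow> irreducible_in Y C \<Longrightarrow> \<exists>x\<in>C. Y closure_of {x} = C"
    using sY unfolding spectral_space_def by blast+
  have t0: "t0_space X" using Y(1) homeomorphic_t0_space[OF hs] by simp
  have cs: "compact_space X" using Y(2) homeomorphic_compact_space[OF hs] by simp
  have int: "qc_open X (U \<inter> V)" if "qc_open X U" "qc_open X V" for U V
  proof -
    have "U \<subseteq> topspace X" "V \<subseteq> topspace X" "qc_open Y (f ` U)" "qc_open Y (f ` V)" using that qcX by auto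
    moreover have "f ` (U \<inter> V) = f ` U \<inter> f ` V" using inj_on_image_Int[OF inj] calculation by simp
    ultimately show ?thesis using qcX Y(3) by auto
  qed
  have basis: "\<exists>W. qc_open X W \<and> x \<in> W \<and> W \<subseteq> U" if U: "openin X U" "x \<in> U" for U x
  proof -
    have Ut: "U \<subseteq> topspace X" using U openin_subset by auto
    have "openin Y (f ` U)" using U homeomorphic_map_openness_eq[OF h] by auto
    then obtain W where W: "qc_open Y W" "f x \<in> W" "W \<subseteq> f ` U" using Y(4) U by blast
    define W' where "W' = {z \<in> topspace X. f z \<in> W}"
    have "W \<subseteq> topspace Y" using W(1) unfolding qc_open_def using openin_subset by auto
    then have fW: "f ` W' = W" unfolding W'_def using sp by auto
    have "W' \<subseteq> U"
    proof
      fix z assume "z \<in> W'"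
      then have "z \<in> topspace X" "f z \<in> f ` U" using W(3) unfolding W'_def by auto
      then show "z \<in> U" using inj Ut by (meson inj_on_image_mem_iff)
    qed
    moreover have "x \<in> W'" using W(2) U Ut unfolding W'_def by auto
    moreover have "qc_open X W'" using qcX fW W(1) unfolding W'_def by auto
    ultimately show ?thesis by blast
  qed
  have sober: "\<exists>x\<in>C. X closure_of {x} = C" if C: "closedin X C" "irreducible_in X C" for C
  proof -
    have Ct: "C \<subseteq> topspace X" using C(1) closedin_subset by auto
    have fC: "closedin Y (f ` C)" using C(1) homeomorphic_map_closedness_eq[OF h] by auto
    have "irreducible_in Y (f ` C)" unfolding irreducible_in_def
    proof (intro conjI allI impI)
      show "f ` C \<noteq> {}" using C(2) unfolding irreducible_in_def by auto
      show "f ` C \<subseteq> topspace Y" using fC closedin_subset by auto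
      fix A B assume AB: "closedin Y A" "closedin Y B" "f ` C \<subseteq> A \<union> B"
      let ?A = "{z \<in> topspace X. f z \<in> A}" and ?B = "{z \<in> topspace X. f z \<in> B}"
      have "closedin X ?A" "closedin X ?B" using AB closedin_continuous_map_preimage[OF cont] by auto
      moreover have "C \<subseteq> ?A \<union> ?B" using AB(3) Ct by auto
      ultimately have "C \<subseteq> ?A \<or> C \<subseteq> ?B" using C(2) unfolding irreducible_in_def by blast
      then show "f ` C \<subseteq> A \<or> f ` C \<subseteq> B" by auto
    qed
    then obtain y where y: "y \<in> f ` C" "Y closure_of {y} = f ` C" using Y(5) fC by blast
    then obtain x where x: "x \<in> C" "y = f x" by auto
    have "f ` (X closure_of {x}) = Y closure_of (f ` {x})"
      using homeomorphic_map_closure_of[OF h, of "{x}"] x Ct by auto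
    then have "f ` (X closure_of {x}) = f ` C" using y x by simp
    moreover have "X closure_of {x} \<subseteq> topspace X" by (rule closure_of_subset_topspace)
    ultimately have "X closure_of {x} = C" using inj_on_image_eq_iff[OF inj] Ct by blast
    then show ?thesis using x by blast
  qed
  show ?thesis unfolding spectral_space_def using t0 cs int basis sober by blast
qed

context IL begin

lemma sober_spec:
  assumes C: "closedin (spec_star m) C" "irreducible_in (spec_star m) C"
  shows "\<exists>x\<in>C. spec_star m closure_of {x} = C"
proof -
  have Cp: "C \<subseteq> primes m" using closedin_subset[OF C(1)] topspace_spec by simp
  have Cne: "C \<noteq> {}" using C(2) unfolding irreducible_in_def by simp
  have irr: "\<And>A B. closedin (spec_star m) A \<Longrightarrow> closedin (spec_star m) B \<Longrightarrow> C \<subseteq> A \<union> B \<Longrightarrow> C \<subseteq> A \<or> C \<subseteq> B"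
    using C(2) unfolding irreducible_in_def by blast
  define T where "T = {c. lat_compact c \<and> (\<exists>q\<in>C. c \<le> q)}"
  define p where "p = Sup T"
  have clV: "closedin (spec_star m) (primes m - zarV m t)" if "lat_compact t" for t
  proof -
    have "topspace (spec_star m) - (primes m - zarV m t) = zarV m t" using zarV_sub topspace_spec by auto
    then show ?thesis unfolding closedin_def using zarV_open[OF that] topspace_spec by auto
  qed
  have Tdir: "sup t1 t2 \<in> T" if t: "t1 \<in> T" "t2 \<in> T" for t1 t2
  proof (rule ccontr)
    assume nT: "sup t1 t2 \<notin> T"
    have ct: "lat_compact t1" "lat_compact t2" using t unfolding T_def by auto
    then have "lat_compact (sup t1 t2)" by (rule compact_sup)
    then have nq: "\<forall>q\<in>C. \<not> sup t1 t2 \<le> q" using nT unfolding T_def by auto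
    have "C \<subseteq> (primes m - zarV m t1) \<union> (primes m - zarV m t2)"
    proof
      fix q assume "q \<in> C"
      then have "q \<in> primes m" "\<not> sup t1 t2 \<le> q" using Cp nq by auto
      then show "q \<in> (primes m - zarV m t1) \<union> (primes m - zarV m t2)" unfolding zarV_def by auto
    qed
    then have "C \<subseteq> primes m - zarV m t1 \<or> C \<subseteq> primes m - zarV m t2"
      using irr clV ct by blast
    moreover obtain q1 where "q1 \<in> C" "t1 \<le> q1" using t(1) unfolding T_def by auto
    moreover obtain q2 where "q2 \<in> C" "t2 \<le> q2" using t(2) unfolding T_def by auto
    ultimately show False using Cp unfolding zarV_def by blast
  qed
  have botT: "bot \<in> T" using Cne compact_bot unfolding T_def by auto
  have Tfin: "finite F \<Longrightarrow> F \<subseteq> T \<Longrightarrow> \<exists>t\<in>T. Sup F \<le> t" for F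
  proof (induction F rule: finite_induct)
    case empty then show ?case using botT by auto
  next
    case (insert x F)
    then obtain t where t: "t \<in> T" "Sup F \<le> t" by auto
    have "x \<in> T" using insert by auto
    then have "sup x t \<in> T" using Tdir t by auto
    moreover have "Sup (insert x F) \<le> sup x t" using t(2) by (simp add: le_supI2)
    ultimately show ?case by blast
  qed
  have Tcov: "\<exists>q\<in>C. c \<le> q" if c: "lat_compact c" "c \<le> p" for c
  proof -
    have "\<exists>F. F \<subseteq> T \<and> finite F \<and> c \<le> Sup F" using compact_le_SupD[OF c(1)] c(2) unfolding p_def by simp
    then obtain F where F: "F \<subseteq> T" "finite F" "c \<le> Sup F" by auto
    obtain t where t: "t \<in> T" "Sup F \<le> t" using Tfin[OF F(2) F(1)] by auto
    obtain q where q: "q \<in> C" "t \<le> q" using t(1) unfolding T_def by auto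
    have "c \<le> q" using F(3) t(2) q(2) by order
    then show ?thesis using q(1) by auto
  qed
  have Tle: "t \<le> p" if "t \<in> T" for t unfolding p_def using that by (rule Sup_upper)
  have pprime: "lat_prime m p" unfolding lat_prime_def
  proof (intro conjI allI impI)
    show "p \<noteq> top"
    proof
      assume "p = top"
      then obtain q where "q \<in> C" "top \<le> q" using Tcov[OF top_compact] by auto
      then show False using Cp prime_ne_top unfolding primes_def by auto
    qed
    fix x y assume xy: "m x y \<le> p"
    show "x \<le> p \<or> y \<le> p"
    proof (rule ccontr)
      assume "\<not> (x \<le> p \<or> y \<le> p)"
      then have "\<not> x \<le> p" "\<not> y \<le> p" by auto
      then obtain x' y' where x': "lat_compact x'" "x' \<le> x" "\<not> x' \<le> p"
        and y': "lat_compact y'" "y' \<le> y" "\<not> y' \<le> p" using not_le_compact by metis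
      have "m x' y' \<le> m x y" using x' y' by (simp add: mono2)
      then have "m x' y' \<le> p" using xy by order
      then obtain q where q: "q \<in> C" "m x' y' \<le> q" using Tcov comp_mult x'(1) y'(1) by blast
      then have "lat_prime m q" using Cp unfolding primes_def by auto
      then have "x' \<le> q \<or> y' \<le> q" using q(2) prime_mult by auto
      then have "x' \<in> T \<or> y' \<in> T" unfolding T_def using x'(1) y'(1) q(1) by auto
      then show False using Tle x'(3) y'(3) by auto
    qed
  qed
  have pC: "p \<in> C"
  proof (rule ccontr)
    assume "p \<notin> C"
    have "openin (spec_star m) (primes m - C)" using C(1) unfolding closedin_def topspace_spec by simp
    moreover have "p \<in> primes m - C" using pprime \<open>p \<notin> C\<close> unfolding primes_def by simp
    ultimately obtain c where c: "lat_compact c" "p \<in> zarV m c" "zarV m c \<subseteq> primes m - C"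
      unfolding openin_spec_iff by blast
    then have "c \<le> p" unfolding zarV_def by simp
    then obtain q where q: "q \<in> C" "c \<le> q" using Tcov c(1) by blast
    then have "q \<in> zarV m c" using Cp unfolding zarV_def by auto
    then show False using c(3) q(1) by auto
  qed
  have "spec_star m closure_of {p} = C"
  proof
    show "spec_star m closure_of {p} \<subseteq> C" using pC C(1) by (simp add: closure_of_minimal)
    show "C \<subseteq> spec_star m closure_of {p}"
    proof
      fix q assume q: "q \<in> C"
      have "q \<le> p" unfolding le_compacts[of q p]
      proof (intro allI impI)
        fix b assume "lat_compact b \<and> b \<le> q"
        then have "b \<in> T" unfolding T_def using q by auto
        then show "b \<le> p" by (rule Tle)
      qed
      then show "q \<in> spec_star m closure_of {p}" using closure_spec pprime q Cp unfolding primes_def by auto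
    qed
  qed
  then show ?thesis using pC by auto
qed

lemma spectral_spec: "spectral_space (spec_star m)"
  unfolding spectral_space_def
proof (intro conjI allI impI)
  show "t0_space (spec_star m)" unfolding t0_space_def topspace_spec
  proof (intro ballI impI)
    fix p q assume pq: "p \<in> primes m" "q \<in> primes m" "p \<noteq> q"
    show "\<exists>U. openin (spec_star m) U \<and> (p \<notin> U) = (q \<in> U)"
    proof (cases "p \<le> q")
      case True
      then have "\<not> q \<le> p" using pq(3) by auto
      then obtain b where b: "lat_compact b" "b \<le> q" "\<not> b \<le> p" using not_le_compact by blast
      then have "q \<in> zarV m b" "p \<notin> zarV m b" using pq unfolding zarV_def by auto
      then show ?thesis using zarV_open[OF b(1)] by blast
    next
      case False
      then obtain b where b: "lat_compact b" "b \<le> p" "\<not> b \<le> q" using not_le_compact by blast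
      then have "p \<in> zarV m b" "q \<notin> zarV m b" using pq unfolding zarV_def by auto
      then show ?thesis using zarV_open[OF b(1)] by blast
    qed
  qed
  show "compact_space (spec_star m)" unfolding compact_space_def topspace_spec
    using zarV_compact[OF compact_bot] zarV_bot by simp
next
  fix U V assume "qc_open (spec_star m) U" "qc_open (spec_star m) V"
  then obtain c d where cd: "lat_compact c" "U = zarV m c" "lat_compact d" "V = zarV m d"
    unfolding qc_open_def using qc_spec by metis
  then have "U \<inter> V = zarV m (sup c d)" "lat_compact (sup c d)" by (auto simp: zarV_sup compact_sup)
  then show "qc_open (spec_star m) (U \<inter> V)" unfolding qc_open_def using zarV_open zarV_compact by simp
next
  fix U x assume "openin (spec_star m) U" "x \<in> U"
  then obtain c where c: "lat_compact c" "x \<in> zarV m c" "zarV m c \<subseteq> U" unfolding openin_spec_iff by blast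
  then show "\<exists>W. qc_open (spec_star m) W \<and> x \<in> W \<and> W \<subseteq> U"
    unfolding qc_open_def using zarV_open zarV_compact by blast
next
  fix C assume "closedin (spec_star m) C" "irreducible_in (spec_star m) C"
  then show "\<exists>x\<in>C. spec_star m closure_of {x} = C" by (rule sober_spec)
qed

end

lemma qc_Inter:
  assumes sX: "spectral_space X"
  shows "finite G \<Longrightarrow> (\<forall>U\<in>G. qc_open X U) \<Longrightarrow> qc_open X (topspace X \<inter> \<Inter>G)"
proof (induction G rule: finite_induct)
  case empty
  have "compact_space X" using sX unfolding spectral_space_def by blast
  then show ?case unfolding qc_open_def compact_space_def by simp
next
  case (insert U G)
  then have q: "qc_open X U" "qc_open X (topspace X \<inter> \<Inter>G)" by auto
  have "U \<subseteq> topspace X" using q(1) unfolding qc_open_def by (simp add: openin_subset)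
  then have "topspace X \<inter> \<Inter>(insert U G) = U \<inter> (topspace X \<inter> \<Inter>G)" by auto
  moreover have "qc_open X (U \<inter> (topspace X \<inter> \<Inter>G))"
    using sX q unfolding spectral_space_def by blast
  ultimately show ?case by simp
qed

lemma patch:
  assumes sX: "spectral_space X"
    and K: "\<forall>S\<in>\<K>. closedin X S \<or> qc_open X S"
    and fip: "\<forall>G. finite G \<and> G \<subseteq> \<K> \<longrightarrow> topspace X \<inter> \<Inter>G \<noteq> {}"
  shows "topspace X \<inter> \<Inter>\<K> \<noteq> {}"
proof -
  define fp where "fp \<F> \<longleftrightarrow> (\<forall>G. finite G \<and> G \<subseteq> \<F> \<longrightarrow> topspace X \<inter> \<Inter>G \<noteq> {})" for \<F>
  define AA where "AA = {\<F>. \<K> \<subseteq> \<F> \<and> (\<forall>S\<in>\<F>. closedin X S \<or> qc_open X S) \<and> fp \<F>}"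
  have KA: "\<K> \<in> AA" unfolding AA_def fp_def using K fip by auto
  have "\<exists>U\<in>AA. \<forall>Y\<in>C. Y \<subseteq> U" if C: "C \<in> chains AA" for C
  proof (cases "C = {}")
    case True then show ?thesis using KA by auto
  next
    case False
    have CA: "C \<subseteq> AA" using C unfolding chains_def by auto
    have "\<Union>C \<in> AA" unfolding AA_def
    proof (intro CollectI conjI)
      obtain D where "D \<in> C" using False by auto
      then show "\<K> \<subseteq> \<Union>C" using CA unfolding AA_def by auto
      show "\<forall>S\<in>\<Union>C. closedin X S \<or> qc_open X S" using CA unfolding AA_def by auto
      show "fp (\<Union>C)" unfolding fp_def
      proof (intro allI impI)
        fix G assume G: "finite G \<and> G \<subseteq> \<Union>C"
        have "subset.chain AA C" using C unfolding chains_alt_def by simp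
        then obtain B where B: "B \<in> C" "G \<subseteq> B"
          using finite_subset_Union_chain[of G C AA] G False by auto
        then have "fp B" using CA unfolding AA_def by auto
        then show "topspace X \<inter> \<Inter>G \<noteq> {}" using B G unfolding fp_def by auto
      qed
    qed
    then show ?thesis by auto
  qed
  then obtain M where MA: "M \<in> AA" and Mmax: "\<forall>N\<in>AA. M \<subseteq> N \<longrightarrow> N = M"
    using Zorn_Lemma2[of AA] by blast
  have KM: "\<K> \<subseteq> M" and Mcq: "\<forall>S\<in>M. closedin X S \<or> qc_open X S" and Mfp: "fp M"
    using MA unfolding AA_def by auto
  have M2: "\<exists>G. finite G \<and> G \<subseteq> M \<and> topspace X \<inter> \<Inter>G \<inter> S = {}"
    if S: "S \<notin> M" "closedin X S \<or> qc_open X S" for S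
  proof (rule ccontr)
    assume nG: "\<not> (\<exists>G. finite G \<and> G \<subseteq> M \<and> topspace X \<inter> \<Inter>G \<inter> S = {})"
    have "fp (insert S M)" unfolding fp_def
    proof (intro allI impI)
      fix G assume G: "finite G \<and> G \<subseteq> insert S M"
      then have "finite (G - {S}) \<and> G - {S} \<subseteq> M" by auto
      then have "topspace X \<inter> \<Inter>(G - {S}) \<inter> S \<noteq> {}" using nG by simp
      moreover have "topspace X \<inter> \<Inter>(G - {S}) \<inter> S \<subseteq> topspace X \<inter> \<Inter>G" by auto
      ultimately show "topspace X \<inter> \<Inter>G \<noteq> {}" by auto
    qed
    then have "insert S M \<in> AA" using KM Mcq S(2) unfolding AA_def by auto
    then have "insert S M = M" using Mmax by auto
    then show False using S(1) by auto
  qed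
  define Cl where "Cl = {A \<in> M. closedin X A}"
  define Z where "Z = topspace X \<inter> \<Inter>Cl"
  have C1: "Z \<inter> \<Inter>G' \<noteq> {}" if G': "finite G'" "G' \<subseteq> M" "\<forall>U\<in>G'. qc_open X U" for G'
  proof -
    define W where "W = topspace X \<inter> \<Inter>G'"
    have "qc_open X W" unfolding W_def using qc_Inter[OF sX G'(1)] G'(3) by simp
    then have cW: "compactin X W" unfolding qc_open_def by simp
    have "W \<inter> \<Inter>Cl \<noteq> {}"
    proof -
      have cl: "\<forall>C\<in>Cl. closedin X C" unfolding Cl_def by auto
      have "W \<inter> \<Inter>F \<noteq> {}" if F: "finite F" "F \<subseteq> Cl" for F
      proof -
        have "finite (G' \<union> F) \<and> G' \<union> F \<subseteq> M" using F G' unfolding Cl_def by auto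
        then have "topspace X \<inter> \<Inter>(G' \<union> F) \<noteq> {}" using Mfp unfolding fp_def by simp
        moreover have "topspace X \<inter> \<Inter>(G' \<union> F) = W \<inter> \<Inter>F" unfolding W_def by auto
        ultimately show ?thesis by simp
      qed
      then have "\<forall>F. finite F \<and> F \<subseteq> Cl \<longrightarrow> W \<inter> \<Inter>F \<noteq> {}" by simp
      then show ?thesis using cW cl unfolding compactin_fip by simp
    qed
    moreover have "W \<inter> \<Inter>Cl = Z \<inter> \<Inter>G'" unfolding W_def Z_def by auto
    ultimately show ?thesis by simp
  qed
  have Zcl: "closedin X Z"
  proof (cases "Cl = {}")
    case True then show ?thesis unfolding Z_def by simp
  next
    case False
    have "Z = \<Inter>Cl" unfolding Z_def using False closedin_subset unfolding Cl_def by auto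
    then show ?thesis using False closedin_Inter unfolding Cl_def by auto
  qed
  have Zirr: "irreducible_in X Z" unfolding irreducible_in_def
  proof (intro conjI allI impI)
    show "Z \<noteq> {}" using C1[of "{}"] by simp
    show "Z \<subseteq> topspace X" unfolding Z_def by auto
    fix A B assume AB: "closedin X A" "closedin X B" "Z \<subseteq> A \<union> B"
    show "Z \<subseteq> A \<or> Z \<subseteq> B"
    proof (rule ccontr)
      assume nAB: "\<not> (Z \<subseteq> A \<or> Z \<subseteq> B)"
      have "A \<notin> M"
      proof
        assume "A \<in> M" then have "A \<in> Cl" using AB(1) unfolding Cl_def by simp
        then have "Z \<subseteq> A" unfolding Z_def by blast
        then show False using nAB by simp
      qed
      then have "\<exists>G. finite G \<and> G \<subseteq> M \<and> topspace X \<inter> \<Inter>G \<inter> A = {}" by (rule M2[OF _ disjI1[OF AB(1)]])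
      then obtain G1 where G1: "finite G1" "G1 \<subseteq> M" "topspace X \<inter> \<Inter>G1 \<inter> A = {}" by auto
      have "B \<notin> M"
      proof
        assume "B \<in> M" then have "B \<in> Cl" using AB(2) unfolding Cl_def by simp
        then have "Z \<subseteq> B" unfolding Z_def by blast
        then show False using nAB by simp
      qed
      then have "\<exists>G. finite G \<and> G \<subseteq> M \<and> topspace X \<inter> \<Inter>G \<inter> B = {}" by (rule M2[OF _ disjI1[OF AB(2)]])
      then obtain G2 where G2: "finite G2" "G2 \<subseteq> M" "topspace X \<inter> \<Inter>G2 \<inter> B = {}" by auto
      define G' where "G' = {U \<in> G1 \<union> G2. qc_open X U}"
      have "finite G'" "G' \<subseteq> M" "\<forall>U\<in>G'. qc_open X U" unfolding G'_def using G1 G2 by auto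
      then have "Z \<inter> \<Inter>G' \<noteq> {}" by (rule C1)
      then obtain z where z: "z \<in> Z" "z \<in> \<Inter>G'" by auto
      have zt: "z \<in> topspace X" using z unfolding Z_def by auto
      have zG: "z \<in> S" if "S \<in> G1 \<union> G2" for S
      proof (cases "qc_open X S")
        case True then show ?thesis using z that unfolding G'_def by auto
      next
        case False
        then have "closedin X S" using Mcq that G1 G2 by auto
        then have "S \<in> Cl" unfolding Cl_def using that G1 G2 by auto
        then show ?thesis using z unfolding Z_def by auto
      qed
      have "z \<in> A \<union> B" using z AB(3) by auto
      then show False
      proof
        assume "z \<in> A"
        then have "z \<in> topspace X \<inter> \<Inter>G1 \<inter> A" using zt zG by auto
        then show False using G1 by auto
      next
        assume "z \<in> B"
        then have "z \<in> topspace X \<inter> \<Inter>G2 \<inter> B" using zt zG by auto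
        then show False using G2 by auto
      qed
    qed
  qed
  have "\<exists>g\<in>Z. X closure_of {g} = Z"
    using sX Zcl Zirr unfolding spectral_space_def by simp
  then obtain g where g: "g \<in> Z" "X closure_of {g} = Z" by auto
  have gM: "g \<in> S" if S: "S \<in> M" for S
  proof (cases "closedin X S")
    case True
    then have "S \<in> Cl" unfolding Cl_def using S by auto
    then show ?thesis using g unfolding Z_def by auto
  next
    case False
    then have q: "qc_open X S" using Mcq S by auto
    then have "Z \<inter> \<Inter>{S} \<noteq> {}" using C1[of "{S}"] S by auto
    then obtain y where y: "y \<in> Z" "y \<in> S" by auto
    then have "y \<in> X closure_of {g}" using g by simp
    moreover have "openin X S" using q unfolding qc_open_def by simp
    ultimately show ?thesis unfolding in_closure_of using y by auto
  qed
  have "g \<in> topspace X" using g unfolding Z_def by auto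
  moreover have "g \<in> \<Inter>\<K>" using gM KM by blast
  ultimately show ?thesis by blast
qed

lemma closed_thomason_qc:
  assumes sX: "spectral_space X" and cl: "closedin X Y" and th: "thomason_subset X Y"
  shows "qc_open X (topspace X - Y)"
proof -
  obtain F where F: "\<forall>Z\<in>F. Z \<subseteq> topspace X \<and> qc_open X (topspace X - Z)" "Y = \<Union>F"
    using th unfolding thomason_subset_def by auto
  define U where "U = (\<lambda>Z. topspace X - Z) ` F"
  have Uq: "\<forall>V\<in>U. qc_open X V" using F(1) unfolding U_def by auto
  have OY: "topspace X - Y = topspace X \<inter> \<Inter>U" unfolding U_def F(2) by auto
  have "\<exists>U'. finite U' \<and> U' \<subseteq> U \<and> topspace X \<inter> \<Inter>U' \<subseteq> topspace X - Y"
  proof (rule ccontr)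
    assume nf: "\<not> (\<exists>U'. finite U' \<and> U' \<subseteq> U \<and> topspace X \<inter> \<Inter>U' \<subseteq> topspace X - Y)"
    have K: "\<forall>S\<in>insert Y U. closedin X S \<or> qc_open X S" using cl Uq by auto
    have fip: "\<forall>G. finite G \<and> G \<subseteq> insert Y U \<longrightarrow> topspace X \<inter> \<Inter>G \<noteq> {}"
    proof (intro allI impI)
      fix G assume G: "finite G \<and> G \<subseteq> insert Y U"
      then have "finite (G - {Y}) \<and> G - {Y} \<subseteq> U" by auto
      then have "\<not> topspace X \<inter> \<Inter>(G - {Y}) \<subseteq> topspace X - Y" using nf by simp
      then obtain x where x: "x \<in> topspace X" "x \<in> \<Inter>(G - {Y})" "x \<in> Y" by auto
      then have "x \<in> topspace X \<inter> \<Inter>G" by auto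
      then show "topspace X \<inter> \<Inter>G \<noteq> {}" by auto
    qed
    have "topspace X \<inter> \<Inter>(insert Y U) \<noteq> {}" by (rule patch[OF sX K fip])
    then show False using OY by auto
  qed
  then obtain U' where U': "finite U'" "U' \<subseteq> U" "topspace X \<inter> \<Inter>U' \<subseteq> topspace X - Y" by auto
  have "topspace X - Y \<subseteq> topspace X \<inter> \<Inter>U'" using OY U'(2) by auto
  then have "topspace X - Y = topspace X \<inter> \<Inter>U'" using U'(3) by (rule antisym)
  moreover have "qc_open X (topspace X \<inter> \<Inter>U')" using qc_Inter[OF sX U'(1)] U'(2) Uq by auto
  ultimately show ?thesis by simp
qed

locale SD = IL m for m :: "'a::complete_lattice \<Rightarrow> 'a \<Rightarrow> 'a" +
  fixes X :: "'b topology" and \<sigma> :: "'a \<Rightarrow> 'b set" and f :: "'b \<Rightarrow> 'a"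
  assumes cont: "continuous_map X (spec_star m) f"
    and sig: "\<And>a. lat_compact a \<Longrightarrow> \<sigma> a = {x \<in> topspace X. f x \<in> supp m a}"
begin

lemma fprime: "x \<in> topspace X \<Longrightarrow> lat_prime m (f x)"
  using continuous_map_image_subset_topspace[OF cont] topspace_spec unfolding primes_def by auto

lemma fprimes: "x \<in> topspace X \<Longrightarrow> f x \<in> primes m"
  using fprime unfolding primes_def by simp

lemma sig_mem: "lat_compact b \<Longrightarrow> x \<in> topspace X \<Longrightarrow> x \<in> \<sigma> b \<longleftrightarrow> \<not> b \<le> f x"
  using sig fprimes unfolding supp_def by auto

lemma sig_sub: "lat_compact b \<Longrightarrow> \<sigma> b \<subseteq> topspace X"
  using sig by auto

lemma phi_sub: "sd_phi \<sigma> a \<subseteq> topspace X"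
  unfolding sd_phi_def using sig_sub by blast

lemma phi_mem: "x \<in> topspace X \<Longrightarrow> x \<in> sd_phi \<sigma> a \<longleftrightarrow> \<not> a \<le> f x"
proof
  assume x: "x \<in> topspace X" "x \<in> sd_phi \<sigma> a"
  then obtain b where b: "lat_compact b" "b \<le> a" "x \<in> \<sigma> b" unfolding sd_phi_def by auto
  then have "\<not> b \<le> f x" using sig_mem x(1) by auto
  then show "\<not> a \<le> f x" using b(2) by (meson order_trans)
next
  assume x: "x \<in> topspace X" "\<not> a \<le> f x"
  then obtain b where b: "lat_compact b" "b \<le> a" "\<not> b \<le> f x" using not_le_compact by blast
  then have "x \<in> \<sigma> b" using sig_mem x(1) by auto
  then show "x \<in> sd_phi \<sigma> a" unfolding sd_phi_def using b by auto
qed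

lemma psi_upper: "lat_compact b \<Longrightarrow> \<sigma> b \<subseteq> Y \<Longrightarrow> b \<le> sd_psi \<sigma> Y"
  unfolding sd_psi_def by (rule Sup_upper) simp

lemma phipsi_sub: "sd_phi \<sigma> (sd_psi \<sigma> Y) \<subseteq> Y"
proof
  fix x assume "x \<in> sd_phi \<sigma> (sd_psi \<sigma> Y)"
  then obtain b where b: "lat_compact b" "b \<le> sd_psi \<sigma> Y" "x \<in> \<sigma> b" unfolding sd_phi_def by auto
  have xt: "x \<in> topspace X" using b sig_sub by auto
  have "\<exists>B. B \<subseteq> {b. lat_compact b \<and> \<sigma> b \<subseteq> Y} \<and> finite B \<and> b \<le> Sup B"
    using compact_le_SupD[OF b(1)] b(2) unfolding sd_psi_def by simp
  then obtain B where B: "B \<subseteq> {b. lat_compact b \<and> \<sigma> b \<subseteq> Y}" "finite B" "b \<le> Sup B" by auto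
  have "\<not> b \<le> f x" using sig_mem b xt by auto
  then have "\<not> Sup B \<le> f x" using B(3) by (meson order_trans)
  then obtain b' where "b' \<in> B" "\<not> b' \<le> f x" by (meson Sup_least)
  then have "lat_compact b'" "\<sigma> b' \<subseteq> Y" "x \<in> \<sigma> b'" using B(1) sig_mem xt by auto
  then show "x \<in> Y" by auto
qed

lemma psi_semiprime: "lat_semiprime m (sd_psi \<sigma> Y)"
  unfolding lat_semiprime_def
proof (intro allI impI)
  fix d assume d: "m d d \<le> sd_psi \<sigma> Y"
  show "d \<le> sd_psi \<sigma> Y" unfolding le_compacts[of d]
  proof (intro allI impI)
    fix d' assume d': "lat_compact d' \<and> d' \<le> d"
    have "m d' d' \<le> m d d" using d' by (simp add: mono2)
    then have le: "m d' d' \<le> sd_psi \<sigma> Y" using d by order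
    have cm: "lat_compact (m d' d')" using d' comp_mult by auto
    have "\<sigma> d' \<subseteq> Y"
    proof
      fix x assume x: "x \<in> \<sigma> d'"
      then have xt: "x \<in> topspace X" using sig_sub d' by auto
      then have "\<not> d' \<le> f x" using x sig_mem d' by auto
      then have "\<not> m d' d' \<le> f x" using prime_mult[OF fprime[OF xt]] by auto
      then have "x \<in> \<sigma> (m d' d')" using sig_mem cm xt by auto
      then have "x \<in> sd_phi \<sigma> (sd_psi \<sigma> Y)" unfolding sd_phi_def using cm le by auto
      then show "x \<in> Y" using phipsi_sub by auto
    qed
    then show "d' \<le> sd_psi \<sigma> Y" using psi_upper d' by auto
  qed
qed

lemma sig_closed: "lat_compact c \<Longrightarrow> closedin X (\<sigma> c)"
proof -
  assume c: "lat_compact c"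
  have "closedin (spec_star m) (supp m c)" unfolding closedin_def topspace_spec
  proof
    show "supp m c \<subseteq> primes m" unfolding supp_def by auto
    have "primes m - supp m c = zarV m c" unfolding supp_eq using zarV_sub by auto
    then show "openin (spec_star m) (primes m - supp m c)" using zarV_open[OF c] by simp
  qed
  then show ?thesis using closedin_continuous_map_preimage[OF cont] sig[OF c] by simp
qed

lemma helperU:
  "finite G \<Longrightarrow> G \<subseteq> {topspace X - \<sigma> c | c. lat_compact c \<and> c \<le> a} \<union> E \<Longrightarrow>
   \<exists>c. lat_compact c \<and> c \<le> a \<and> (\<forall>x\<in>topspace X. c \<le> f x \<longrightarrow> x \<in> \<Inter>(G - E))"
proof (induction G rule: finite_induct)
  case empty then show ?case using compact_bot by (intro exI[of _ bot]) auto
next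
  case (insert S G)
  then obtain c where c: "lat_compact c" "c \<le> a" "\<forall>x\<in>topspace X. c \<le> f x \<longrightarrow> x \<in> \<Inter>(G - E)" by auto
  show ?case
  proof (cases "S \<in> E")
    case True
    then have "insert S G - E = G - E" by auto
    then show ?thesis using c by auto
  next
    case False
    then obtain c' where c': "S = topspace X - \<sigma> c'" "lat_compact c'" "c' \<le> a" using insert.prems by auto
    have "\<forall>x\<in>topspace X. sup c c' \<le> f x \<longrightarrow> x \<in> \<Inter>(insert S G - E)"
    proof (intro ballI impI)
      fix x assume x: "x \<in> topspace X" "sup c c' \<le> f x"
      then have "x \<in> \<Inter>(G - E)" using c by auto
      moreover have "x \<notin> \<sigma> c'" using sig_mem[OF c'(2) x(1)] x(2) by auto
      ultimately show "x \<in> \<Inter>(insert S G - E)" using c' x(1) by auto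
    qed
    moreover have "lat_compact (sup c c')" "sup c c' \<le> a" using c c' by (auto simp: compact_sup)
    ultimately show ?thesis by blast
  qed
qed

lemma helperS:
  assumes p: "lat_prime m p"
  shows "finite G \<Longrightarrow> G \<subseteq> {\<sigma> b | b. lat_compact b \<and> \<not> b \<le> p} \<union> E \<Longrightarrow>
   \<exists>b. lat_compact b \<and> \<not> b \<le> p \<and> (\<forall>x\<in>topspace X. \<not> b \<le> f x \<longrightarrow> x \<in> \<Inter>(G - E))"
proof (induction G rule: finite_induct)
  case empty then show ?case using top_compact prime_ne_top[OF p] by (intro exI[of _ top]) auto
next
  case (insert S G)
  then obtain b where b: "lat_compact b" "\<not> b \<le> p" "\<forall>x\<in>topspace X. \<not> b \<le> f x \<longrightarrow> x \<in> \<Inter>(G - E)" by auto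
  show ?case
  proof (cases "S \<in> E")
    case True
    then have "insert S G - E = G - E" by auto
    then show ?thesis using b by auto
  next
    case False
    then obtain b' where b': "S = \<sigma> b'" "lat_compact b'" "\<not> b' \<le> p" using insert.prems by auto
    have "\<forall>x\<in>topspace X. \<not> m b b' \<le> f x \<longrightarrow> x \<in> \<Inter>(insert S G - E)"
    proof (intro ballI impI)
      fix x assume x: "x \<in> topspace X" "\<not> m b b' \<le> f x"
      then have "\<not> b \<le> f x" "\<not> b' \<le> f x" using prime_mult[OF fprime[OF x(1)]] by auto
      then have "x \<in> \<Inter>(G - E)" "x \<in> \<sigma> b'" using b sig_mem[OF b'(2) x(1)] x(1) by auto
      then show "x \<in> \<Inter>(insert S G - E)" using b' by auto
    qed
    moreover have "lat_compact (m b b')" "\<not> m b b' \<le> p" using b b' comp_mult prime_mult[OF p] by auto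
    ultimately show ?thesis by blast
  qed
qed

end

definition lrad :: "('a::complete_lattice \<Rightarrow> 'a \<Rightarrow> 'a) \<Rightarrow> 'a \<Rightarrow> 'a" where
  "lrad m c = Inf {s. lat_semiprime m s \<and> c \<le> s}"

lemma lrad_semiprime: "lat_semiprime m (lrad m c)"
  unfolding lat_semiprime_def
proof (intro allI impI)
  fix b assume b: "m b b \<le> lrad m c"
  show "b \<le> lrad m c" unfolding lrad_def
  proof (rule Inf_greatest)
    fix s assume "s \<in> {s. lat_semiprime m s \<and> c \<le> s}"
    then have s: "lat_semiprime m s" "c \<le> s" by auto
    have "lrad m c \<le> s" unfolding lrad_def using s by (intro Inf_lower) simp
    then have "m b b \<le> s" using b by (rule order_trans[rotated])
    then show "b \<le> s" using s(1) unfolding lat_semiprime_def by blast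
  qed
qed

lemma lrad_ge: "c \<le> lrad m c"
  unfolding lrad_def by (rule Inf_greatest) simp

lemma lrad_le: "lat_semiprime m s \<Longrightarrow> c \<le> s \<Longrightarrow> lrad m c \<le> s"
  unfolding lrad_def by (rule Inf_lower) simp

context SD begin

lemma dir1:
  assumes h: "homeomorphic_map X (spec_star m) f"
  shows "classifying m X \<sigma>"
proof -
  have sur: "f ` topspace X = primes m" and inj: "inj_on f (topspace X)"
    using h topspace_spec by (auto simp: homeomorphic_eq_everything_map)
  have sX: "spectral_space X" by (rule spectral_homeo[OF h spectral_spec])
  have qcX: "qc_open X U \<longleftrightarrow> U \<subseteq> topspace X \<and> qc_open (spec_star m) (f ` U)" for U
    unfolding qc_open_def using homeomorphic_map_openness_eq[OF h, of U] homeomorphic_map_compactness_eq[OF h, of U] by auto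
  have compl_qc: "qc_open X (topspace X - \<sigma> b)" if b: "lat_compact b" for b
  proof -
    have "f ` (topspace X - \<sigma> b) = zarV m b"
    proof
      show "f ` (topspace X - \<sigma> b) \<subseteq> zarV m b"
        using sig_mem[OF b] fprimes unfolding zarV_def by auto
      show "zarV m b \<subseteq> f ` (topspace X - \<sigma> b)"
      proof
        fix q assume q: "q \<in> zarV m b"
        then obtain x where x: "x \<in> topspace X" "q = f x" using sur zarV_sub by blast
        then have "x \<notin> \<sigma> b" using sig_mem[OF b x(1)] q unfolding zarV_def by auto
        then show "q \<in> f ` (topspace X - \<sigma> b)" using x by auto
      qed
    qed
    then show ?thesis using qcX zarV_open[OF b] zarV_compact[OF b] unfolding qc_open_def by auto
  qed
  have CL1: "thomason_subset X (sd_phi \<sigma> a) \<and> sd_psi \<sigma> (sd_phi \<sigma> a) = a" if a: "lat_semiprime m a" for a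
  proof
    show "thomason_subset X (sd_phi \<sigma> a)" unfolding thomason_subset_def
    proof (intro exI conjI)
      show "sd_phi \<sigma> a = \<Union>{\<sigma> b | b. lat_compact b \<and> b \<le> a}" unfolding sd_phi_def ..
      show "\<forall>Z\<in>{\<sigma> b | b. lat_compact b \<and> b \<le> a}. Z \<subseteq> topspace X \<and> qc_open X (topspace X - Z)"
        using sig_sub compl_qc by auto
    qed
    show "sd_psi \<sigma> (sd_phi \<sigma> a) = a"
    proof (rule antisym)
      show "sd_psi \<sigma> (sd_phi \<sigma> a) \<le> a" unfolding sd_psi_def
      proof (rule Sup_least)
        fix b assume "b \<in> {b. lat_compact b \<and> \<sigma> b \<subseteq> sd_phi \<sigma> a}"
        then have b: "lat_compact b" "\<sigma> b \<subseteq> sd_phi \<sigma> a" by auto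
        show "b \<le> a"
        proof (rule ccontr)
          assume "\<not> b \<le> a"
          then obtain p where p: "lat_prime m p" "a \<le> p" "\<not> b \<le> p" using SP a b(1) by blast
          then obtain x where x: "x \<in> topspace X" "p = f x" using sur unfolding primes_def by auto
          then have "x \<in> \<sigma> b" using sig_mem[OF b(1) x(1)] p by auto
          moreover have "x \<notin> sd_phi \<sigma> a" using phi_mem[OF x(1)] p x by auto
          ultimately show False using b(2) by auto
        qed
      qed
      show "a \<le> sd_psi \<sigma> (sd_phi \<sigma> a)" unfolding le_compacts[of a]
      proof (intro allI impI)
        fix b assume b: "lat_compact b \<and> b \<le> a"
        then have "\<sigma> b \<subseteq> sd_phi \<sigma> a" unfolding sd_phi_def by auto
        then show "b \<le> sd_psi \<sigma> (sd_phi \<sigma> a)" using psi_upper b by auto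
      qed
    qed
  qed
  have CL2: "lat_semiprime m (sd_psi \<sigma> Y) \<and> sd_phi \<sigma> (sd_psi \<sigma> Y) = Y" if Y: "thomason_subset X Y" for Y
  proof
    show "lat_semiprime m (sd_psi \<sigma> Y)" by (rule psi_semiprime)
    obtain F where F: "\<forall>Z\<in>F. Z \<subseteq> topspace X \<and> qc_open X (topspace X - Z)" "Y = \<Union>F"
      using Y unfolding thomason_subset_def by auto
    have "Y \<subseteq> sd_phi \<sigma> (sd_psi \<sigma> Y)"
    proof
      fix x assume "x \<in> Y"
      then obtain Z where Z: "Z \<in> F" "x \<in> Z" using F(2) by auto
      then have Zt: "Z \<subseteq> topspace X" and q: "qc_open X (topspace X - Z)" using F(1) by auto
      then have "qc_open (spec_star m) (f ` (topspace X - Z))" using qcX by auto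
      then obtain c where c: "lat_compact c" "f ` (topspace X - Z) = zarV m c"
        unfolding qc_open_def using qc_spec by metis
      have "Z = \<sigma> c"
      proof (intro set_eqI iffI)
        fix z assume z: "z \<in> Z"
        then have zt: "z \<in> topspace X" using Zt by auto
        have "f z \<notin> f ` (topspace X - Z)"
        proof
          assume "f z \<in> f ` (topspace X - Z)"
          then have "z \<in> topspace X - Z" using inj zt by (meson Diff_subset inj_on_image_mem_iff)
          then show False using z by auto
        qed
        then have "\<not> c \<le> f z" using c(2) fprimes[OF zt] unfolding zarV_def by auto
        then show "z \<in> \<sigma> c" using sig_mem[OF c(1) zt] by auto
      next
        fix z assume z: "z \<in> \<sigma> c"
        then have zt: "z \<in> topspace X" using sig_sub c(1) by auto
        then have "\<not> c \<le> f z" using sig_mem[OF c(1)] z by auto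
        then have "f z \<notin> zarV m c" unfolding zarV_def by auto
        then show "z \<in> Z" using c(2) zt by auto
      qed
      then have "\<sigma> c \<subseteq> Y" using Z(1) F(2) by auto
      then have "c \<le> sd_psi \<sigma> Y" by (rule psi_upper[OF c(1)])
      then show "x \<in> sd_phi \<sigma> (sd_psi \<sigma> Y)" unfolding sd_phi_def using c(1) Z(2) \<open>Z = \<sigma> c\<close> by auto
    qed
    then show "sd_phi \<sigma> (sd_psi \<sigma> Y) = Y" using phipsi_sub by auto
  qed
  show ?thesis unfolding classifying_def using sX CL1 CL2 by blast
qed

end

context SD begin

lemma dir2:
  assumes cl: "classifying m X \<sigma>"
  shows "homeomorphic_map X (spec_star m) f"
proof -
  have sX: "spectral_space X" using cl unfolding classifying_def by blast
  have CL1: "\<And>a. lat_semiprime m a \<Longrightarrow> thomason_subset X (sd_phi \<sigma> a) \<and> sd_psi \<sigma> (sd_phi \<sigma> a) = a"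
    using cl unfolding classifying_def by blast
  have CL2: "\<And>Y. thomason_subset X Y \<Longrightarrow> lat_semiprime m (sd_psi \<sigma> Y) \<and> sd_phi \<sigma> (sd_psi \<sigma> Y) = Y"
    using cl unfolding classifying_def by blast
  have phi_rad: "sd_phi \<sigma> (lrad m c) = \<sigma> c" if c: "lat_compact c" for c
  proof (intro set_eqI iffI)
    fix x assume x: "x \<in> sd_phi \<sigma> (lrad m c)"
    then have xt: "x \<in> topspace X" using phi_sub by auto
    then have "\<not> lrad m c \<le> f x" using phi_mem x by auto
    then have "\<not> c \<le> f x" using lrad_le prime_semiprime fprime[OF xt] by blast
    then show "x \<in> \<sigma> c" using sig_mem[OF c xt] by simp
  next
    fix x assume x: "x \<in> \<sigma> c"
    then have xt: "x \<in> topspace X" using sig_sub c by auto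
    then have "\<not> c \<le> f x" using sig_mem[OF c] x by auto
    then have "\<not> lrad m c \<le> f x" using lrad_ge order_trans by metis
    then show "x \<in> sd_phi \<sigma> (lrad m c)" using phi_mem xt by auto
  qed
  have psi_sig: "sd_psi \<sigma> (\<sigma> c) = lrad m c" if c: "lat_compact c" for c
    using CL1[OF lrad_semiprime[of m c]] phi_rad[OF c] by simp
  have compl_qc: "qc_open X (topspace X - \<sigma> c)" if c: "lat_compact c" for c
  proof -
    have "thomason_subset X (\<sigma> c)" using CL1[OF lrad_semiprime[of m c]] phi_rad[OF c] by simp
    then show ?thesis using closed_thomason_qc[OF sX sig_closed[OF c]] by simp
  qed
  have inj: "inj_on f (topspace X)"
  proof (rule inj_onI)
    fix x y assume xy: "x \<in> topspace X" "y \<in> topspace X" "f x = f y"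
    show "x = y"
    proof (rule ccontr)
      assume "x \<noteq> y"
      have t0: "t0_space X" using sX unfolding spectral_space_def by blast
      then obtain U where U: "openin X U" "x \<notin> U \<longleftrightarrow> y \<in> U" using xy \<open>x \<noteq> y\<close> unfolding t0_space_def by blast
      have sep: "False" if u: "u \<in> topspace X" "v \<in> topspace X" "f u = f v" "u \<in> U" "v \<notin> U" for u v
      proof -
        have "\<exists>W. qc_open X W \<and> u \<in> W \<and> W \<subseteq> U" using sX U(1) u(4) unfolding spectral_space_def by blast
        then obtain W where W: "qc_open X W" "u \<in> W" "W \<subseteq> U" by auto
        let ?Y = "topspace X - W"
        have Wt: "W \<subseteq> topspace X" using W(1) unfolding qc_open_def by (simp add: openin_subset)
        have "thomason_subset X ?Y" unfolding thomason_subset_def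
          using W(1) Wt by (intro exI[of _ "{?Y}"]) (auto simp: Diff_Diff_Int Int_absorb1)
        then have eq: "sd_phi \<sigma> (sd_psi \<sigma> ?Y) = ?Y" using CL2 by blast
        have "v \<in> ?Y" using u W by auto
        then have "\<not> sd_psi \<sigma> ?Y \<le> f v" using eq phi_mem u(2) by blast
        then have "u \<in> sd_phi \<sigma> (sd_psi \<sigma> ?Y)" using phi_mem u(1) u(3) by auto
        then show False using eq W(2) by auto
      qed
      show False
      proof (cases "x \<in> U")
        case True then show False using sep[of x y] xy U by auto
      next
        case False then show False using sep[of y x] xy U by auto
      qed
    qed
  qed
  have sur: "f ` topspace X = primes m"
  proof
    show "f ` topspace X \<subseteq> primes m" using fprimes by auto
    show "primes m \<subseteq> f ` topspace X"
    proof
      fix p assume "p \<in> primes m"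
      then have p: "lat_prime m p" unfolding primes_def by simp
      define A where "A = {\<sigma> b | b. lat_compact b \<and> \<not> b \<le> p}"
      define U where "U = {topspace X - \<sigma> c | c. lat_compact c \<and> c \<le> p}"
      have K: "\<forall>S\<in>A \<union> U. closedin X S \<or> qc_open X S" unfolding A_def U_def
        using sig_closed compl_qc by auto
      have fip: "\<forall>G. finite G \<and> G \<subseteq> A \<union> U \<longrightarrow> topspace X \<inter> \<Inter>G \<noteq> {}"
      proof (intro allI impI)
        fix G assume G: "finite G \<and> G \<subseteq> A \<union> U"
        obtain b where b: "lat_compact b" "\<not> b \<le> p" "\<forall>x\<in>topspace X. \<not> b \<le> f x \<longrightarrow> x \<in> \<Inter>(G - (U - A))"
          using helperS[OF p, of G "U - A"] G unfolding A_def by auto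
        obtain c where c: "lat_compact c" "c \<le> p" "\<forall>x\<in>topspace X. c \<le> f x \<longrightarrow> x \<in> \<Inter>(G - A)"
          using helperU[of G p A] G unfolding U_def by auto
        have "\<not> \<sigma> b \<subseteq> \<sigma> c"
        proof
          assume "\<sigma> b \<subseteq> \<sigma> c"
          then have "b \<le> sd_psi \<sigma> (\<sigma> c)" by (rule psi_upper[OF b(1)])
          also have "\<dots> = lrad m c" by (rule psi_sig[OF c(1)])
          also have "\<dots> \<le> p" using lrad_le prime_semiprime[OF p] c(2) by blast
          finally show False using b(2) by simp
        qed
        then obtain x where x: "x \<in> \<sigma> b" "x \<notin> \<sigma> c" by auto
        then have xt: "x \<in> topspace X" using sig_sub b(1) by auto
        have nb: "\<not> b \<le> f x" using x(1) sig_mem[OF b(1) xt] by simp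
        have cx: "c \<le> f x" using x(2) sig_mem[OF c(1) xt] by simp
        have "x \<in> \<Inter>(G - (U - A))" by (rule mp[OF bspec[OF b(3) xt] nb])
        moreover have "x \<in> \<Inter>(G - A)" by (rule mp[OF bspec[OF c(3) xt] cx])
        ultimately have "x \<in> \<Inter>(G - (U - A)) \<inter> \<Inter>(G - A)" by simp
        then have "x \<in> \<Inter>G" using G by blast
        then show "topspace X \<inter> \<Inter>G \<noteq> {}" using xt by auto
      qed
      have "topspace X \<inter> \<Inter>(A \<union> U) \<noteq> {}" by (rule patch[OF sX K fip])
      then obtain x where x: "x \<in> topspace X" "x \<in> \<Inter>(A \<union> U)" by auto
      have "f x = p"
      proof (rule antisym)
        show "f x \<le> p" unfolding le_compacts[of "f x"]
        proof (intro allI impI)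
          fix b assume b: "lat_compact b \<and> b \<le> f x"
          show "b \<le> p"
          proof (rule ccontr)
            assume "\<not> b \<le> p"
            then have "\<sigma> b \<in> A" unfolding A_def using b by auto
            then have "x \<in> \<sigma> b" using x by auto
            then show False using sig_mem x(1) b by auto
          qed
        qed
        show "p \<le> f x" unfolding le_compacts[of p]
        proof (intro allI impI)
          fix c assume c: "lat_compact c \<and> c \<le> p"
          then have "topspace X - \<sigma> c \<in> U" unfolding U_def by auto
          then have "x \<notin> \<sigma> c" using x by auto
          then show "c \<le> f x" using sig_mem x(1) c by auto
        qed
      qed
      then show "p \<in> f ` topspace X" using x(1) by auto
    qed
  qed
  have qcform: "\<exists>c. lat_compact c \<and> W = topspace X - \<sigma> c" if W: "qc_open X W" for W
  proof -
    let ?Y = "topspace X - W"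
    have Wt: "W \<subseteq> topspace X" using W unfolding qc_open_def by (simp add: openin_subset)
    have "thomason_subset X ?Y" unfolding thomason_subset_def
      using W Wt by (intro exI[of _ "{?Y}"]) (auto simp: Diff_Diff_Int Int_absorb1)
    then have eq: "sd_phi \<sigma> (sd_psi \<sigma> ?Y) = ?Y" using CL2 by blast
    define a where "a = sd_psi \<sigma> ?Y"
    have Ycl: "closedin X ?Y" using W unfolding qc_open_def by auto
    have "\<exists>c. lat_compact c \<and> c \<le> a \<and> ?Y = \<sigma> c"
    proof (rule ccontr)
      assume nc: "\<not> (\<exists>c. lat_compact c \<and> c \<le> a \<and> ?Y = \<sigma> c)"
      define U where "U = {topspace X - \<sigma> c | c. lat_compact c \<and> c \<le> a}"
      have K: "\<forall>S\<in>insert ?Y U. closedin X S \<or> qc_open X S" unfolding U_def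
        using Ycl compl_qc by auto
      have fip: "\<forall>G. finite G \<and> G \<subseteq> insert ?Y U \<longrightarrow> topspace X \<inter> \<Inter>G \<noteq> {}"
      proof (intro allI impI)
        fix G assume G: "finite G \<and> G \<subseteq> insert ?Y U"
        then have "G \<subseteq> U \<union> {?Y}" by auto
        then obtain c where c: "lat_compact c" "c \<le> a" "\<forall>x\<in>topspace X. c \<le> f x \<longrightarrow> x \<in> \<Inter>(G - {?Y})"
          using helperU[of G a "{?Y}"] G unfolding U_def by auto
        have "\<sigma> c \<subseteq> sd_phi \<sigma> a" unfolding sd_phi_def using c(1,2) by blast
        then have "\<sigma> c \<subseteq> ?Y" using eq unfolding a_def by simp
        then have "?Y \<noteq> \<sigma> c" using nc c by auto
        then obtain x where x: "x \<in> ?Y" "x \<notin> \<sigma> c" using \<open>\<sigma> c \<subseteq> ?Y\<close> by auto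
        then have "c \<le> f x" using sig_mem[OF c(1)] by auto
        then have "x \<in> \<Inter>(G - {?Y})" using c(3) x by auto
        then have "x \<in> topspace X \<inter> \<Inter>G" using x by auto
        then show "topspace X \<inter> \<Inter>G \<noteq> {}" by auto
      qed
      have "topspace X \<inter> \<Inter>(insert ?Y U) \<noteq> {}" by (rule patch[OF sX K fip])
      then obtain x where x: "x \<in> ?Y" "x \<in> \<Inter>U" by auto
      then have "x \<in> sd_phi \<sigma> a" using eq unfolding a_def by simp
      then obtain b where b: "lat_compact b" "b \<le> a" "x \<in> \<sigma> b" unfolding sd_phi_def by auto
      then have "topspace X - \<sigma> b \<in> U" unfolding U_def by auto
      then show False using x b by auto
    qed
    then obtain c where c: "lat_compact c" "?Y = \<sigma> c" by auto
    then have "W = topspace X - \<sigma> c" using Wt by auto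
    then show ?thesis using c by auto
  qed
  have om: "open_map X (spec_star m) f" unfolding open_map_def
  proof (intro allI impI)
    fix U assume U: "openin X U"
    have Ut: "U \<subseteq> topspace X" using U by (simp add: openin_subset)
    show "openin (spec_star m) (f ` U)" unfolding openin_spec_iff
    proof (intro conjI ballI)
      show "f ` U \<subseteq> primes m" using Ut fprimes by auto
      fix q assume "q \<in> f ` U"
      then obtain x where x: "x \<in> U" "q = f x" by auto
      have "\<exists>W. qc_open X W \<and> x \<in> W \<and> W \<subseteq> U" using sX U x(1) unfolding spectral_space_def by blast
      then obtain W where W: "qc_open X W" "x \<in> W" "W \<subseteq> U" by auto
      obtain c where c: "lat_compact c" "W = topspace X - \<sigma> c" using qcform[OF W(1)] by auto
      have xt: "x \<in> topspace X" using x Ut by auto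
      have "q \<in> zarV m c" using W(2) c sig_mem[OF c(1) xt] fprimes[OF xt] x(2) unfolding zarV_def by auto
      moreover have "zarV m c \<subseteq> f ` U"
      proof
        fix r assume r: "r \<in> zarV m c"
        then obtain y where y: "y \<in> topspace X" "r = f y" using sur zarV_sub by blast
        then have "y \<notin> \<sigma> c" using sig_mem[OF c(1) y(1)] r unfolding zarV_def by auto
        then have "y \<in> W" using c y by auto
        then show "r \<in> f ` U" using W(3) y by auto
      qed
      ultimately show "\<exists>c. lat_compact c \<and> q \<in> zarV m c \<and> zarV m c \<subseteq> f ` U" using c(1) by blast
    qed
  qed
  show ?thesis
    using bijective_open_imp_homeomorphic_map[OF cont om] sur inj topspace_spec by simp
qed

end

theorem mainTheorem11:
  fixes m :: "'a::complete_lattice \<Rightarrow> 'a \<Rightarrow> 'a"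
    and X :: "'b topology" and \<sigma> :: "'a \<Rightarrow> 'b set" and f :: "'b \<Rightarrow> 'a"
  assumes "ideal_lattice m"
    and "support_datum m X \<sigma>"
    and "continuous_map X (spec_star m) f"
    and "\<And>a. lat_compact a \<Longrightarrow> \<sigma> a = {x \<in> topspace X. f x \<in> supp m a}"
  shows "classifying m X \<sigma> \<longleftrightarrow> homeomorphic_map X (spec_star m) f"
proof -
  interpret SD m X \<sigma> f
    by unfold_locales (use assms in auto)
  show ?thesis using dir1 dir2 by blast
qed

end
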